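(* Let $\begin{bmatrix}A'&B'\\C'&D\end{bmatrix}$ and $\begin{bmatrix}A''&B''\\C''&D\end{bmatrix}$ be connecting operators of two observable, commutative, weakly coisometric realizations of a Schur-class function $S\in{\mathcal S}_d({\mathcal U},{\mathcal Y})$, with state spaces ${\mathcal X}'$ and ${\mathcal X}''$. Then the output pairs $(C',{\mathbf A}')$ and $(C'',{\mathbf A}'')$ are unitarily equivalent, i.e., there is a unitary $U:{\mathcal X}'\to{\mathcal X}''$ with $C''U=C'$ and $A''_jU=UA'_j$ for $j=1,\dots,d$.
   Context: Let ${\mathbb B}^d=\{\lambda\in{\mathbb C}^d:\langle\lambda,\lambda\rangle<1\}$. ${\mathcal H}_{\mathcal Y}(k_d)$ is the reproducing kernel Hilbert space of ${\mathcal Y}$-valued functions on ${\mathbb B}^d$ with kernel $k_d(\lambda,\zeta)I_{\mathcal Y}$, $k_d(\lambda,\zeta)=1/(1-\langle\lambda,\zeta\rangle)$. ${\mathcal S}_d({\mathcal U},{\mathcal Y})$ is the set of ${\mathcal L}({\mathcal U},{\mathcal Y})$-valued holomorphic $S$ on ${\mathbb B}^d$ such that $M_S:f\mapsto Sf$ is a contraction from ${\mathcal H}_{\mathcal U}(k_d)$ into ${\mathcal H}_{\mathcal Y}(k_d)$. A realization of $S$: Hilbert space ${\mathcal X}$, $A_j\in{\mathcal L}({\mathcal X})$, $B_j\in{\mathcal L}({\mathcal U},{\mathcal X})$, $C\in{\mathcal L}({\mathcal X},{\mathcal Y})$, $D\in{\mathcal L}({\mathcal U},{\mathcal Y})$ with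 $S(\lambda)=D+C(I-Z(\lambda)A)^{-1}Z(\lambda)B$, where $A=\mathrm{col}(A_j)$, ${\mathbf A}=(A_1,\dots,A_d)$, $B=\mathrm{col}(B_j)$, $Z(\lambda)=[\lambda_1I_{\mathcal X}\ \cdots\ \lambda_dI_{\mathcal X}]$; connecting operator ${\mathbf U}=\begin{bmatrix}A&B\\C&D\end{bmatrix}$. Commutative: the $A_j$ pairwise commute. Observable: $C(I-Z(\lambda)A)^{-1}x\equiv0$ implies $x=0$. Weakly coisometric: ${\mathbf U}$ is a contraction and ${\mathbf U}^*$ is isometric on ${\mathcal D}\oplus{\mathcal Y}$, ${\mathcal D}=\overline{\mathrm{span}}\{Z(\zeta)^*(I-A^*Z(\zeta)^* )^{-1}C^*y:\zeta\in{\mathbb B}^d,y\in{\mathcal Y}\}\subset{\mathcal X}^d$. *)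

theory Defs
  imports "HOL-Analysis.Analysis"
begin

text \<open>HOL-Analysis only provides real inner product spaces, so we introduce complex
inner product spaces as normed spaces with a complex scalar multiplication (extending
the real one) and a complex inner product, linear in the first and conjugate-linear in
the second argument, inducing the norm.\<close>

class cinner_space = real_normed_vector +
  fixes cscale :: "complex \<Rightarrow> 'a \<Rightarrow> 'a"  (infixr \<open>*\<^sub>C\<close> 75)
    and cinner :: "'a \<Rightarrow> 'a \<Rightarrow> complex"
  assumes cscale_add_right: "c *\<^sub>C (x + y) = c *\<^sub>C x + c *\<^sub>C y"
    and cscale_add_left: "(a + b) *\<^sub>C x = a *\<^sub>C x + b *\<^sub>C x"
    and cscale_cscale: "a *\<^sub>C (b *\<^sub>C x) = (a * b) *\<^sub>C x"
    and cscale_one: "1 *\<^sub>C x = x"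
    and cscale_of_real: "complex_of_real r *\<^sub>C x = r *\<^sub>R x"
    and cinner_commute: "cinner x y = cnj (cinner y x)"
    and cinner_add_left: "cinner (x + y) z = cinner x z + cinner y z"
    and cinner_cscale_left: "cinner (c *\<^sub>C x) y = c * cinner x y"
    and cinner_self_norm: "cinner x x = complex_of_real ((norm x)\<^sup>2)"

class chilbert = cinner_space + complete_space

definition bounded_clinear :: "('a::cinner_space \<Rightarrow> 'b::cinner_space) \<Rightarrow> bool" where
  "bounded_clinear T \<longleftrightarrow>
     (\<forall>x y. T (x + y) = T x + T y) \<and> (\<forall>c x. T (c *\<^sub>C x) = c *\<^sub>C T x) \<and>
     (\<exists>K. \<forall>x. norm (T x) \<le> norm x * K)"

text \<open>Hilbert-space adjoint (exists for bounded operators between Hilbert spaces).\<close>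
definition adjoint :: "('a::cinner_space \<Rightarrow> 'b::cinner_space) \<Rightarrow> 'b \<Rightarrow> 'a" where
  "adjoint T = (SOME T'. \<forall>x y. cinner (T x) y = cinner x (T' y))"

definition unitary :: "('a::cinner_space \<Rightarrow> 'b::cinner_space) \<Rightarrow> bool" where
  "unitary U \<longleftrightarrow> bounded_clinear U \<and> bij U \<and> (\<forall>x. norm (U x) = norm x)"

text \<open>Points of \<open>\<complex>\<^sup>d\<close> are functions \<open>'d \<Rightarrow> complex\<close> for a finite index type \<open>'d\<close>
(so \<open>d = CARD('d)\<close>).\<close>

definition cdot :: "('d::finite \<Rightarrow> complex) \<Rightarrow> ('d \<Rightarrow> complex) \<Rightarrow> complex" where
  "cdot l \<zeta> = (\<Sum>j\<in>UNIV. l j * cnj (\<zeta> j))"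

definition ballB :: "('d::finite \<Rightarrow> complex) set" where
  "ballB = {l. (\<Sum>j\<in>UNIV. (cmod (l j))\<^sup>2) < 1}"

definition kd :: "('d::finite \<Rightarrow> complex) \<Rightarrow> ('d \<Rightarrow> complex) \<Rightarrow> complex" where
  "kd l \<zeta> = 1 / (1 - cdot l \<zeta>)"

text \<open>\<open>in_Hkd_le f M\<close>: \<open>f\<close> belongs to the reproducing kernel Hilbert space
\<open>\<H>\<^sub>\<Y>(k\<^sub>d)\<close> with kernel \<open>k\<^sub>d(l,\<zeta>) I\<^sub>\<Y>\<close> and \<open>\<parallel>f\<parallel> \<le> M\<close>.  This is the standard
description of an RKHS: \<open>\<langle>f, \<Sum>\<^sub>i k(\<cdot>,\<zeta>\<^sub>i)y\<^sub>i\<rangle> = \<Sum>\<^sub>i \<langle>f(\<zeta>\<^sub>i),y\<^sub>i\<rangle>\<close> and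
\<open>\<parallel>\<Sum>\<^sub>i k(\<cdot>,\<zeta>\<^sub>i)y\<^sub>i\<parallel>\<^sup>2 = \<Sum>\<^sub>i\<^sub>,\<^sub>l k(\<zeta>\<^sub>l,\<zeta>\<^sub>i)\<langle>y\<^sub>i,y\<^sub>l\<rangle>\<close>.\<close>
definition in_Hkd_le :: "(('d::finite \<Rightarrow> complex) \<Rightarrow> 'y::cinner_space) \<Rightarrow> real \<Rightarrow> bool" where
  "in_Hkd_le f M \<longleftrightarrow> 0 \<le> M \<and>
     (\<forall>(n::nat) (\<zeta>::nat \<Rightarrow> ('d \<Rightarrow> complex)) (y::nat \<Rightarrow> 'y). (\<forall>i<n. \<zeta> i \<in> ballB) \<longrightarrow>
        (cmod (\<Sum>i<n. cinner (f (\<zeta> i)) (y i)))\<^sup>2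
          \<le> M\<^sup>2 * Re (\<Sum>i<n. \<Sum>l<n. kd (\<zeta> l) (\<zeta> i) * cinner (y i) (y l)))"

text \<open>Holomorphy of an operator-valued function on the ball: (weakly) holomorphic in each
variable separately, which by Hartogs' theorem is holomorphy on the ball.\<close>
definition op_holomorphic_ball ::
  "(('d::finite \<Rightarrow> complex) \<Rightarrow> 'u::cinner_space \<Rightarrow> 'y::cinner_space) \<Rightarrow> bool" where
  "op_holomorphic_ball S \<longleftrightarrow>
     (\<forall>l\<in>ballB. bounded_clinear (S l)) \<and>
     (\<forall>l\<in>ballB. \<forall>j u y. (\<lambda>t. cinner (S (l(j := t)) u) y) field_differentiable (at (l j)))"

text \<open>Schur class \<open>\<S>\<^sub>d(\<U>,\<Y>)\<close>: holomorphic and \<open>M\<^sub>S\<close> is a contraction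
\<open>\<H>\<^sub>\<U>(k\<^sub>d) \<rightarrow> \<H>\<^sub>\<Y>(k\<^sub>d)\<close>.\<close>
definition schur_class ::
  "(('d::finite \<Rightarrow> complex) \<Rightarrow> 'u::cinner_space \<Rightarrow> 'y::cinner_space) \<Rightarrow> bool" where
  "schur_class S \<longleftrightarrow> op_holomorphic_ball S \<and>
     (\<forall>(f::('d \<Rightarrow> complex) \<Rightarrow> 'u) M. in_Hkd_le f M \<longrightarrow> in_Hkd_le (\<lambda>l. S l (f l)) M)"

text \<open>\<open>A = col(A\<^sub>j)\<close>, \<open>B = col(B\<^sub>j)\<close> are given by the families \<open>A j\<close>, \<open>B j\<close>;
elements of \<open>\<X>\<^sup>d\<close> are functions \<open>'d \<Rightarrow> 'x\<close>.  \<open>Z(l)A = \<Sum>\<^sub>j l\<^sub>j A\<^sub>j\<close>.\<close>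

definition ZA :: "('d::finite \<Rightarrow> complex) \<Rightarrow> ('d \<Rightarrow> 'x::cinner_space \<Rightarrow> 'x) \<Rightarrow> 'x \<Rightarrow> 'x" where
  "ZA l A x = (\<Sum>j\<in>UNIV. l j *\<^sub>C A j x)"

definition ZB :: "('d::finite \<Rightarrow> complex) \<Rightarrow> ('d \<Rightarrow> 'u \<Rightarrow> 'x::cinner_space) \<Rightarrow> 'u \<Rightarrow> 'x" where
  "ZB l B u = (\<Sum>j\<in>UNIV. l j *\<^sub>C B j u)"

definition is_realization ::
  "(('d::finite \<Rightarrow> complex) \<Rightarrow> 'u::cinner_space \<Rightarrow> 'y::cinner_space)
   \<Rightarrow> ('d \<Rightarrow> 'x::cinner_space \<Rightarrow> 'x) \<Rightarrow> ('d \<Rightarrow> 'u \<Rightarrow> 'x) \<Rightarrow> ('x \<Rightarrow> 'y) \<Rightarrow> ('u \<Rightarrow> 'y) \<Rightarrow> bool" where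
  "is_realization S A B C D \<longleftrightarrow>
     (\<forall>j. bounded_clinear (A j) \<and> bounded_clinear (B j)) \<and>
     bounded_clinear C \<and> bounded_clinear D \<and>
     (\<forall>l\<in>ballB. bij (\<lambda>x. x - ZA l A x) \<and>
        (\<forall>u. S l u = D u + C (inv (\<lambda>x. x - ZA l A x) (ZB l B u))))"

definition commutative_ops :: "('d \<Rightarrow> 'x \<Rightarrow> 'x) \<Rightarrow> bool" where
  "commutative_ops A \<longleftrightarrow> (\<forall>i j. A i \<circ> A j = A j \<circ> A i)"

definition observable ::
  "('d::finite \<Rightarrow> 'x::cinner_space \<Rightarrow> 'x) \<Rightarrow> ('x \<Rightarrow> 'y::cinner_space) \<Rightarrow> bool" where
  "observable A C \<longleftrightarrow>
     (\<forall>x. (\<forall>l\<in>ballB. C (inv (\<lambda>z. z - ZA l A z) x) = 0) \<longrightarrow> x = 0)"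

text \<open>Generators of \<open>\<D>\<close>: \<open>Z(\<zeta>)\<^sup>*(I - A\<^sup>*Z(\<zeta>)\<^sup>*)\<^sup>-\<^sup>1C\<^sup>*y\<close>, where
\<open>Z(\<zeta>)\<^sup>*x = (cnj \<zeta>\<^sub>j x)\<^sub>j\<close> and \<open>A\<^sup>*h = \<Sum>\<^sub>j A\<^sub>j\<^sup>* h\<^sub>j\<close>.\<close>
definition Dgen ::
  "('d::finite \<Rightarrow> 'x::cinner_space \<Rightarrow> 'x) \<Rightarrow> ('x \<Rightarrow> 'y::cinner_space) \<Rightarrow> ('d \<Rightarrow> complex) \<Rightarrow> 'y \<Rightarrow> 'd \<Rightarrow> 'x" where
  "Dgen A C \<zeta> y =
     (let w = inv (\<lambda>x. x - (\<Sum>j\<in>UNIV. adjoint (A j) (cnj (\<zeta> j) *\<^sub>C x))) (adjoint C y)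
      in (\<lambda>j. cnj (\<zeta> j) *\<^sub>C w))"

text \<open>\<open>\<D>\<close>: closed linear span of the generators in \<open>\<X>\<^sup>d\<close>, whose norm is
\<open>\<parallel>h\<parallel> = (\<Sum>\<^sub>j \<parallel>h\<^sub>j\<parallel>\<^sup>2)\<^sup>1\<^sup>/\<^sup>2\<close>.\<close>
definition Dspace ::
  "('d::finite \<Rightarrow> 'x::cinner_space \<Rightarrow> 'x) \<Rightarrow> ('x \<Rightarrow> 'y::cinner_space) \<Rightarrow> ('d \<Rightarrow> 'x) set" where
  "Dspace A C = {h. \<forall>\<epsilon>>0. \<exists>(n::nat) (c::nat \<Rightarrow> complex) (\<zeta>::nat \<Rightarrow> ('d \<Rightarrow> complex)) (y::nat \<Rightarrow> 'y).
       (\<forall>i<n. \<zeta> i \<in> ballB) \<and>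
       sqrt (\<Sum>j\<in>UNIV. (norm (h j - (\<Sum>i<n. c i *\<^sub>C Dgen A C (\<zeta> i) (y i) j)))\<^sup>2) < \<epsilon>}"

text \<open>Weakly coisometric: the connecting operator
\<open>\<bold>U(x,u) = ((A\<^sub>jx + B\<^sub>ju)\<^sub>j, Cx + Du)\<close> is a contraction, and
\<open>\<bold>U\<^sup>*(h,y) = (\<Sum>\<^sub>j A\<^sub>j\<^sup>*h\<^sub>j + C\<^sup>*y, \<Sum>\<^sub>j B\<^sub>j\<^sup>*h\<^sub>j + D\<^sup>*y)\<close> is isometric on \<open>\<D> \<oplus> \<Y>\<close>.\<close>
definition weakly_coisometric ::
  "('d::finite \<Rightarrow> 'x::cinner_space \<Rightarrow> 'x) \<Rightarrow> ('d \<Rightarrow> 'u::cinner_space \<Rightarrow> 'x) \<Rightarrow> ('x \<Rightarrow> 'y::cinner_space)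
   \<Rightarrow> ('u \<Rightarrow> 'y) \<Rightarrow> bool" where
  "weakly_coisometric A B C D \<longleftrightarrow>
     (\<forall>x u. (\<Sum>j\<in>UNIV. (norm (A j x + B j u))\<^sup>2) + (norm (C x + D u))\<^sup>2 \<le> (norm x)\<^sup>2 + (norm u)\<^sup>2) \<and>
     (\<forall>h\<in>Dspace A C. \<forall>y.
        (norm ((\<Sum>j\<in>UNIV. adjoint (A j) (h j)) + adjoint C y))\<^sup>2
        + (norm ((\<Sum>j\<in>UNIV. adjoint (B j) (h j)) + adjoint D y))\<^sup>2
        = (\<Sum>j\<in>UNIV. (norm (h j))\<^sup>2) + (norm y)\<^sup>2)"

end

theory Submission
  imports Defs
begin

context cinner_space begin
lemma cscale_zero_right[simp]: "c *\<^sub>C 0 = 0"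
proof -
  have "c *\<^sub>C 0 + c *\<^sub>C 0 = c *\<^sub>C 0 + 0" by (simp add: cscale_add_right[symmetric])
  then show ?thesis by (rule add_left_imp_eq)
qed
lemma cscale_zero_left[simp]: "0 *\<^sub>C x = 0"
proof -
  have "0 *\<^sub>C x + 0 *\<^sub>C x = 0 *\<^sub>C x + 0" by (simp add: cscale_add_left[symmetric])
  then show ?thesis by (rule add_left_imp_eq)
qed
lemma cscale_minus_right: "c *\<^sub>C (- x) = - (c *\<^sub>C x)"
proof -
  have "c *\<^sub>C (- x) + c *\<^sub>C x = 0" by (simp add: cscale_add_right[symmetric])
  then show ?thesis by (simp add: eq_neg_iff_add_eq_0)
qed
lemma cscale_minus_left: "(- c) *\<^sub>C x = - (c *\<^sub>C x)"
proof -
  have "(- c) *\<^sub>C x + c *\<^sub>C x = 0" by (simp add: cscale_add_left[symmetric])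
  then show ?thesis by (simp add: eq_neg_iff_add_eq_0)
qed

lemma cscale_diff_right: "c *\<^sub>C (x - y) = c *\<^sub>C x - c *\<^sub>C y"
  unfolding diff_conv_add_uminus cscale_add_right cscale_minus_right ..
lemma cscale_diff_left: "(a - b) *\<^sub>C x = a *\<^sub>C x - b *\<^sub>C x"
  using cscale_add_left[of a "-b" x] by (simp add: cscale_minus_left)
lemma cscale_sum_right: "c *\<^sub>C (\<Sum>i\<in>I. f i) = (\<Sum>i\<in>I. c *\<^sub>C f i)"
  by (induction I rule: infinite_finite_induct) (auto simp: cscale_add_right)
lemma cscale_sum_left: "(\<Sum>i\<in>I. f i) *\<^sub>C x = (\<Sum>i\<in>I. f i *\<^sub>C x)"
  by (induction I rule: infinite_finite_induct) (auto simp: cscale_add_left)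

lemma cinner_add_right: "cinner x (y + z) = cinner x y + cinner x z"
proof -
  have "cinner x (y + z) = cnj (cinner (y+z) x)" by (rule cinner_commute)
  also have "\<dots> = cnj (cinner y x) + cnj (cinner z x)" by (simp add: cinner_add_left)
  also have "\<dots> = cinner x y + cinner x z" by (simp flip: cinner_commute)
  finally show ?thesis .
qed
lemma cinner_cscale_right: "cinner x (c *\<^sub>C y) = cnj c * cinner x y"
proof -
  have "cinner x (c *\<^sub>C y) = cnj (cinner (c *\<^sub>C y) x)" by (rule cinner_commute)
  also have "\<dots> = cnj c * cnj (cinner y x)" by (simp add: cinner_cscale_left)
  also have "\<dots> = cnj c * cinner x y" by (simp flip: cinner_commute)
  finally show ?thesis .
qed
lemma cinner_zero_left[simp]: "cinner 0 y = 0"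
  using cinner_cscale_left[of 0 0 y] by simp
lemma cinner_zero_right[simp]: "cinner x 0 = 0"
  using cinner_cscale_right[of x 0 0] by simp
lemma cinner_minus_left: "cinner (- x) y = - cinner x y"
  using cinner_cscale_left[of "-1" x y] by (simp add: cscale_minus_left cscale_one)
lemma cinner_minus_right: "cinner x (- y) = - cinner x y"
  using cinner_cscale_right[of x "-1" y] by (simp add: cscale_minus_left cscale_one)
lemma cinner_diff_left: "cinner (x - y) z = cinner x z - cinner y z"
  using cinner_add_left[of x "-y" z] by (simp add: cinner_minus_left)
lemma cinner_diff_right: "cinner x (y - z) = cinner x y - cinner x z"
  using cinner_add_right[of x y "-z"] by (simp add: cinner_minus_right)
lemma cinner_sum_left: "cinner (\<Sum>i\<in>I. f i) y = (\<Sum>i\<in>I. cinner (f i) y)"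
  by (induction I rule: infinite_finite_induct) (auto simp: cinner_add_left)
lemma cinner_sum_right: "cinner x (\<Sum>i\<in>I. f i) = (\<Sum>i\<in>I. cinner x (f i))"
  by (induction I rule: infinite_finite_induct) (auto simp: cinner_add_right)

lemmas cinner_simps = cinner_add_left cinner_add_right cinner_diff_left cinner_diff_right
  cinner_cscale_left cinner_cscale_right cinner_sum_left cinner_sum_right
  cinner_minus_left cinner_minus_right

lemma norm_sq_cinner: "(norm x)\<^sup>2 = Re (cinner x x)"
  by (simp add: cinner_self_norm)
lemma cinner_self_eq_zero[simp]: "cinner x x = 0 \<longleftrightarrow> x = 0"
  by (simp add: cinner_self_norm)
lemma cinner_ext_right: "(\<And>z. cinner z x = cinner z y) \<Longrightarrow> x = y"
proof -
  assume "\<And>z. cinner z x = cinner z y"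
  then have "cinner (x - y) (x - y) = 0" by (simp add: cinner_diff_right)
  then show "x = y" by simp
qed
lemma cinner_ext_left: "(\<And>z. cinner x z = cinner y z) \<Longrightarrow> x = y"
proof -
  assume "\<And>z. cinner x z = cinner y z"
  then have "cinner (x - y) (x - y) = 0" by (simp add: cinner_diff_left)
  then show "x = y" by simp
qed

lemma norm_cscale: "norm (c *\<^sub>C x) = cmod c * norm x"
proof -
  have "cinner (c *\<^sub>C x) (c *\<^sub>C x) = (c * cnj c) * cinner x x"
    by (simp add: cinner_cscale_left cinner_cscale_right)
  also have "c * cnj c = complex_of_real ((cmod c)\<^sup>2)" by (rule complex_norm_square[symmetric])
  finally have "complex_of_real ((norm (c *\<^sub>C x))\<^sup>2) = complex_of_real ((cmod c)\<^sup>2 * (norm x)\<^sup>2)"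
    by (simp only: cinner_self_norm of_real_mult)
  then have "(norm (c *\<^sub>C x))\<^sup>2 = (cmod c * norm x)\<^sup>2"
    by (simp only: of_real_eq_iff power_mult_distrib)
  then show ?thesis
    using power2_eq_iff_nonneg[of "norm (c *\<^sub>C x)" "cmod c * norm x"] by simp
qed

lemma Re_cinner_commute: "Re (cinner y x) = Re (cinner x y)"
  by (subst cinner_commute) simp

lemma norm_add_sq: "(norm (x + y))\<^sup>2 = (norm x)\<^sup>2 + (norm y)\<^sup>2 + 2 * Re (cinner x y)"
  using Re_cinner_commute[of y x] by (simp add: norm_sq_cinner cinner_add_left cinner_add_right)
lemma norm_diff_sq: "(norm (x - y))\<^sup>2 = (norm x)\<^sup>2 + (norm y)\<^sup>2 - 2 * Re (cinner x y)"
  using Re_cinner_commute[of y x] by (simp add: norm_sq_cinner cinner_diff_left cinner_diff_right)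

end

lemma norm_sub_opt:
  fixes p z :: "'a::cinner_space"
  assumes "z \<noteq> 0"
  shows "(norm (p - (cinner p z / complex_of_real ((norm z)\<^sup>2)) *\<^sub>C z))\<^sup>2
         = (norm p)\<^sup>2 - (cmod (cinner p z))\<^sup>2 / (norm z)\<^sup>2"
proof -
  define a where "a = cinner p z"
  define n where "n = (norm z)\<^sup>2"
  have n0: "n > 0" using assms by (simp add: n_def)
  define t where "t = a / complex_of_real n"
  have e1: "(norm (p - t *\<^sub>C z))\<^sup>2 = (norm p)\<^sup>2 + (cmod t)\<^sup>2 * n - 2 * Re (cnj t * a)"
    by (simp add: norm_diff_sq norm_cscale power_mult_distrib cinner_cscale_right a_def n_def)
  have e2: "cnj t * a = complex_of_real ((cmod a)\<^sup>2 / n)"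
  proof -
    have h: "a * cnj a = (complex_of_real (cmod a))\<^sup>2" by (metis complex_norm_square of_real_power)
    show ?thesis unfolding t_def using h by (simp add: mult.commute)
  qed
  have e3: "(cmod t)\<^sup>2 * n = (cmod a)\<^sup>2 / n"
    using n0 unfolding t_def by (simp add: norm_divide power_divide power2_eq_square)
  show ?thesis unfolding a_def[symmetric] n_def[symmetric] t_def[symmetric]
    using e1 e2 e3 by simp
qed

lemma cauchy_schwarz:
  fixes x y :: "'a::cinner_space"
  shows "cmod (cinner x y) \<le> norm x * norm y"
proof (cases "y = 0")
  case True then show ?thesis by simp
next
  case False
  have ny: "norm y > 0" using False by simp
  have "0 \<le> (norm x)\<^sup>2 - (cmod (cinner x y))\<^sup>2 / (norm y)\<^sup>2"
    using norm_sub_opt[OF False, of x] by (metis zero_le_power2)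
  then have "(cmod (cinner x y))\<^sup>2 \<le> (norm x)\<^sup>2 * (norm y)\<^sup>2" using ny by (simp add: field_simps)
  then have "(cmod (cinner x y))\<^sup>2 \<le> (norm x * norm y)\<^sup>2" by (simp add: power_mult_distrib)
  then show ?thesis by (simp add: power2_le_iff_abs_le)
qed

lemma cinner_scaleR_left: "cinner (r *\<^sub>R x) y = complex_of_real r * cinner x y"
  by (simp flip: cscale_of_real add: cinner_cscale_left)

lemma parallelogram:
  fixes u v :: "'a::cinner_space"
  shows "(norm (u - v))\<^sup>2 + (norm (u + v))\<^sup>2 = 2 * (norm u)\<^sup>2 + 2 * (norm v)\<^sup>2"
  by (simp add: norm_add_sq norm_diff_sq)

definition csubspace :: "'a::cinner_space set \<Rightarrow> bool" where
  "csubspace M \<longleftrightarrow> 0 \<in> M \<and> (\<forall>x\<in>M. \<forall>y\<in>M. x + y \<in> M) \<and> (\<forall>c. \<forall>x\<in>M. c *\<^sub>C x \<in> M)"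

lemma projection_exists:
  fixes M :: "'a::chilbert set" and x :: 'a
  assumes cl: "closed M" and sub: "csubspace M"
  shows "\<exists>m\<in>M. \<forall>z\<in>M. cinner (x - m) z = 0"
proof -
  have M0: "0 \<in> M" and Madd: "\<And>a b. a \<in> M \<Longrightarrow> b \<in> M \<Longrightarrow> a + b \<in> M"
    and Msc: "\<And>c a. a \<in> M \<Longrightarrow> c *\<^sub>C a \<in> M"
    using sub unfolding csubspace_def by auto
  have MscR: "\<And>r a. a \<in> M \<Longrightarrow> r *\<^sub>R a \<in> M" by (metis Msc cscale_of_real)
  define D where "D = (\<lambda>m. norm (x - m)) ` M"
  define d where "d = Inf D"
  have Dne: "D \<noteq> {}" using M0 unfolding D_def by blast
  have bdd: "bdd_below D" unfolding D_def by (rule bdd_belowI[of _ 0]) auto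
  have dle: "\<And>m. m \<in> M \<Longrightarrow> d \<le> norm (x - m)"
    unfolding d_def D_def by (rule cInf_lower) (use bdd D_def in auto)
  have d0: "0 \<le> d" unfolding d_def by (rule cInf_greatest[OF Dne]) (auto simp: D_def)
  have "\<forall>n. \<exists>m\<in>M. (norm (x - m))\<^sup>2 < d\<^sup>2 + 1 / real (Suc n)"
  proof
    fix n
    have "d < sqrt (d\<^sup>2 + 1 / real (Suc n))"
      by (rule real_less_rsqrt) simp
    then obtain t where "t \<in> D" "t < sqrt (d\<^sup>2 + 1 / real (Suc n))"
      using cInf_lessD[OF Dne] unfolding d_def by blast
    then obtain m where m: "m \<in> M" "norm (x - m) < sqrt (d\<^sup>2 + 1 / real (Suc n))"
      unfolding D_def by auto
    have "(norm (x - m))\<^sup>2 < (sqrt (d\<^sup>2 + 1 / real (Suc n)))\<^sup>2"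
      by (rule power_strict_mono) (use m in auto)
    then have "(norm (x - m))\<^sup>2 < d\<^sup>2 + 1 / real (Suc n)"
      by (simp add: add_nonneg_nonneg)
    then show "\<exists>m\<in>M. (norm (x - m))\<^sup>2 < d\<^sup>2 + 1 / real (Suc n)" using m(1) by blast
  qed
  then obtain ms where msM: "\<And>n. ms n \<in> M"
    and msd: "\<And>n. (norm (x - ms n))\<^sup>2 < d\<^sup>2 + 1 / real (Suc n)"
    by metis
  have pd: "(norm (ms i - ms j))\<^sup>2 \<le> 2 / real (Suc i) + 2 / real (Suc j)" for i j
  proof -
    define mid where "mid = (1/2::real) *\<^sub>R (ms i + ms j)"
    have midM: "mid \<in> M" unfolding mid_def using MscR Madd msM by blast
    have "(norm ((x - ms j) - (x - ms i)))\<^sup>2 + (norm ((x - ms j) + (x - ms i)))\<^sup>2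
          = 2 * (norm (x - ms j))\<^sup>2 + 2 * (norm (x - ms i))\<^sup>2" by (rule parallelogram)
    moreover have "(x - ms j) - (x - ms i) = ms i - ms j" by simp
    moreover have "(x - ms j) + (x - ms i) = 2 *\<^sub>R (x - mid)"
      unfolding mid_def by (simp add: algebra_simps scaleR_2)
    moreover have "(norm (2 *\<^sub>R (x - mid)))\<^sup>2 = 4 * (norm (x - mid))\<^sup>2"
      by (simp add: power_mult_distrib)
    moreover have "d\<^sup>2 \<le> (norm (x - mid))\<^sup>2" using dle[OF midM] d0 by (simp add: power_mono)
    ultimately have "(norm (ms i - ms j))\<^sup>2 + 4 * (norm (x - mid))\<^sup>2
        = 2 * (norm (x - ms j))\<^sup>2 + 2 * (norm (x - ms i))\<^sup>2" by (simp only:)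
    then show ?thesis using msd[of i] msd[of j] \<open>d\<^sup>2 \<le> (norm (x - mid))\<^sup>2\<close> by linarith
  qed
  have "Cauchy ms"
  proof (rule CauchyI)
    fix e :: real assume e: "0 < e"
    obtain N :: nat where N: "4 / e\<^sup>2 < real N" using reals_Archimedean2 by blast
    show "\<exists>N. \<forall>i\<ge>N. \<forall>j\<ge>N. norm (ms i - ms j) < e"
    proof (intro exI allI impI)
      fix i j assume ij: "N \<le> i" "N \<le> j"
      have e2: "0 < e\<^sup>2" using e by simp
      have a: "2 / real (Suc i) \<le> 2 / real (Suc N)" using ij by (simp add: frac_le)
      have b: "2 / real (Suc j) \<le> 2 / real (Suc N)" using ij by (simp add: frac_le)
      have "4 < real N * e\<^sup>2" using N e2 by (simp add: pos_divide_less_eq)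
      moreover have "real (Suc N) * e\<^sup>2 = real N * e\<^sup>2 + e\<^sup>2" by (simp add: algebra_simps)
      ultimately have "4 < real (Suc N) * e\<^sup>2" using e2 by linarith
      then have c: "4 / real (Suc N) < e\<^sup>2" by (simp add: pos_divide_less_eq mult.commute)
      have "(norm (ms i - ms j))\<^sup>2 < e\<^sup>2" using pd[of i j] a b c by linarith
      then show "norm (ms i - ms j) < e" using e by (simp add: power_less_imp_less_base)
    qed
  qed
  then obtain L where L: "ms \<longlonglongrightarrow> L" using Cauchy_convergent convergent_def by blast
  have LM: "L \<in> M" by (rule closed_sequentially[OF cl msM L])
  have Lmin: "(norm (x - L))\<^sup>2 \<le> d\<^sup>2"
  proof (rule LIMSEQ_le)
    show "(\<lambda>n. (norm (x - ms n))\<^sup>2) \<longlonglongrightarrow> (norm (x - L))\<^sup>2"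
      by (intro tendsto_intros L)
    show "(\<lambda>n. d\<^sup>2 + 1 / real (Suc n)) \<longlonglongrightarrow> d\<^sup>2"
      using tendsto_add[OF tendsto_const[of "d\<^sup>2"] LIMSEQ_inverse_real_of_nat] 
      by (simp add: inverse_eq_divide)
    show "\<exists>N. \<forall>n\<ge>N. (norm (x - ms n))\<^sup>2 \<le> d\<^sup>2 + 1 / real (Suc n)"
      using msd less_imp_le by blast
  qed
  have "\<forall>z\<in>M. cinner (x - L) z = 0"
  proof
    fix z assume zM: "z \<in> M"
    show "cinner (x - L) z = 0"
    proof (rule ccontr)
      assume ne: "cinner (x - L) z \<noteq> 0"
      then have z0: "z \<noteq> 0" by auto
      define t where "t = cinner (x - L) z / complex_of_real ((norm z)\<^sup>2)"
      have LtM: "L + t *\<^sub>C z \<in> M" using Madd Msc LM zM by blast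
      have "x - (L + t *\<^sub>C z) = (x - L) - t *\<^sub>C z" by simp
      then have "(norm (x - (L + t *\<^sub>C z)))\<^sup>2
            = (norm (x - L))\<^sup>2 - (cmod (cinner (x - L) z))\<^sup>2 / (norm z)\<^sup>2"
        using norm_sub_opt[OF z0, of "x - L"] unfolding t_def by (simp only:)
      moreover have "d\<^sup>2 \<le> (norm (x - (L + t *\<^sub>C z)))\<^sup>2" using dle[OF LtM] d0 by (simp add: power_mono)
      moreover have "0 < (cmod (cinner (x - L) z))\<^sup>2 / (norm z)\<^sup>2" using ne z0 by simp
      ultimately show False using Lmin by linarith
    qed
  qed
  then show ?thesis using LM by blast
qed


lemma bclin_add: "bounded_clinear T \<Longrightarrow> T (x + y) = T x + T y"
  unfolding bounded_clinear_def by blast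
lemma bclin_scale: "bounded_clinear T \<Longrightarrow> T (c *\<^sub>C x) = c *\<^sub>C T x"
  unfolding bounded_clinear_def by blast
lemma bclin_bound: "bounded_clinear T \<Longrightarrow> \<exists>K. \<forall>x. norm (T x) \<le> norm x * K"
  unfolding bounded_clinear_def by blast
lemma bclin_zero: "bounded_clinear T \<Longrightarrow> T 0 = 0"
  using bclin_scale[of T 0 0] by simp
lemma bclin_minus: "bounded_clinear T \<Longrightarrow> T (- x) = - T x"
  using bclin_scale[of T "-1" x] by (simp add: cscale_minus_left cscale_one)
lemma bclin_diff: "bounded_clinear T \<Longrightarrow> T (x - y) = T x - T y"
  using bclin_add[of T x "-y"] bclin_minus[of T y] by simp
lemma bclin_sum: "bounded_clinear T \<Longrightarrow> T (\<Sum>i\<in>I. f i) = (\<Sum>i\<in>I. T (f i))"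
  by (induction I rule: infinite_finite_induct) (auto simp: bclin_add bclin_zero)
lemma bclin_real: "bounded_clinear T \<Longrightarrow> bounded_linear T"
proof -
  assume T: "bounded_clinear T"
  obtain K where K: "\<forall>x. norm (T x) \<le> norm x * K" using bclin_bound[OF T] by blast
  show "bounded_linear T"
  proof (rule bounded_linear_intro)
    show "T (x + y) = T x + T y" for x y by (rule bclin_add[OF T])
    show "T (r *\<^sub>R x) = r *\<^sub>R T x" for r x
      using bclin_scale[OF T, of "complex_of_real r" x] by (simp add: cscale_of_real)
    show "norm (T x) \<le> norm x * K" for x using K by blast
  qed
qed

lemma riesz:
  fixes f :: "'a::chilbert \<Rightarrow> complex"
  assumes add: "\<And>x y. f (x + y) = f x + f y" and hom: "\<And>c x. f (c *\<^sub>C x) = c * f x"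
    and bnd: "\<And>x. cmod (f x) \<le> norm x * K"
  shows "\<exists>z. \<forall>x. f x = cinner x z"
proof (cases "\<forall>x. f x = 0")
  case True then show ?thesis by (intro exI[of _ 0]) simp
next
  case False
  then obtain x0 where x0: "f x0 \<noteq> 0" by blast
  have f0: "f 0 = 0" using hom[of 0 0] by simp
  have fminus: "f (- x) = - f x" for x using hom[of "-1" x] by (simp add: cscale_minus_left cscale_one)
  have fdiff: "f (x - y) = f x - f y" for x y using add[of x "-y"] fminus[of y] by simp
  have bl: "bounded_linear f"
  proof (rule bounded_linear_intro)
    show "f (x + y) = f x + f y" for x y by (rule add)
    show "f (r *\<^sub>R x) = r *\<^sub>R f x" for r x
      using hom[of "complex_of_real r" x] by (simp add: cscale_of_real scaleR_conv_of_real)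
    show "norm (f x) \<le> norm x * K" for x using bnd by simp
  qed
  define M where "M = {x. f x = 0}"
  have cl: "closed M" unfolding M_def
    by (rule closed_Collect_eq) (auto intro: linear_continuous_on[OF bl])
  have sub: "csubspace M" unfolding csubspace_def M_def using f0 add hom by auto
  obtain m where mM: "m \<in> M" and orth: "\<And>z. z \<in> M \<Longrightarrow> cinner (x0 - m) z = 0"
    using projection_exists[OF cl sub, of x0] by blast
  define p where "p = x0 - m"
  have fp: "f p = f x0" using mM unfolding p_def M_def by (simp add: fdiff)
  then have p0: "p \<noteq> 0" using x0 f0 by auto
  have np: "(norm p)\<^sup>2 > 0" using p0 by simp
  define z where "z = (cnj (f p) / complex_of_real ((norm p)\<^sup>2)) *\<^sub>C p"
  have "f x = cinner x z" for x
  proof -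
    define q where "q = x - (f x / f p) *\<^sub>C p"
    have "f q = 0" unfolding q_def using x0 fp by (simp add: fdiff hom)
    then have "cinner p q = 0" using orth[of q] unfolding M_def p_def by simp
    then have "cinner q p = 0" by (metis cinner_commute complex_cnj_zero)
    then have "cinner x p = (f x / f p) * cinner p p" unfolding q_def
      by (simp add: cinner_diff_left cinner_cscale_left)
    then have "cinner x p = (f x / f p) * complex_of_real ((norm p)\<^sup>2)"
      by (simp add: cinner_self_norm)
    then show ?thesis unfolding z_def using x0 fp np
      by (simp add: cinner_cscale_right)
  qed
  then show ?thesis by blast
qed

lemma adjoint_exists:
  fixes T :: "'a::chilbert \<Rightarrow> 'b::cinner_space"
  assumes T: "bounded_clinear T"
  shows "\<exists>T'. \<forall>x y. cinner (T x) y = cinner x (T' y)"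
proof -
  obtain K where K: "\<And>x. norm (T x) \<le> norm x * K" using bclin_bound[OF T] by blast
  have "\<forall>y. \<exists>z. \<forall>x. cinner (T x) y = cinner x z"
  proof
    fix y
    show "\<exists>z. \<forall>x. cinner (T x) y = cinner x z"
    proof (rule riesz)
      show "cinner (T (x + x')) y = cinner (T x) y + cinner (T x') y" for x x'
        by (simp add: bclin_add[OF T] cinner_add_left)
      show "cinner (T (c *\<^sub>C x)) y = c * cinner (T x) y" for c x
        by (simp add: bclin_scale[OF T] cinner_cscale_left)
      show "cmod (cinner (T x) y) \<le> norm x * (K * norm y)" for x
      proof -
        have "cmod (cinner (T x) y) \<le> norm (T x) * norm y" by (rule cauchy_schwarz)
        also have "\<dots> \<le> norm x * K * norm y" using K[of x] by (simp add: mult_right_mono)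
        finally show ?thesis by (simp add: mult.assoc)
      qed
    qed
  qed
  then show ?thesis by metis
qed

lemma adjoint_prop:
  fixes T :: "'a::chilbert \<Rightarrow> 'b::cinner_space"
  assumes T: "bounded_clinear T"
  shows "cinner (T x) y = cinner x (adjoint T y)"
proof -
  have "\<forall>x y. cinner (T x) y = cinner x (adjoint T y)"
    unfolding adjoint_def by (rule someI_ex[OF adjoint_exists[OF T]])
  then show ?thesis by blast
qed

lemma adjoint_add:
  fixes T :: "'a::chilbert \<Rightarrow> 'b::cinner_space"
  assumes T: "bounded_clinear T"
  shows "adjoint T (a + b) = adjoint T a + adjoint T b"
  by (rule cinner_ext_right) (simp add: adjoint_prop[OF T, symmetric] cinner_add_right)

lemma adjoint_scale:
  fixes T :: "'a::chilbert \<Rightarrow> 'b::cinner_space"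
  assumes T: "bounded_clinear T"
  shows "adjoint T (c *\<^sub>C a) = c *\<^sub>C adjoint T a"
  by (rule cinner_ext_right) (simp add: adjoint_prop[OF T, symmetric] cinner_cscale_right)

lemma adjoint_zero:
  fixes T :: "'a::chilbert \<Rightarrow> 'b::cinner_space"
  assumes T: "bounded_clinear T"
  shows "adjoint T 0 = 0"
  using adjoint_scale[OF T, of 0 0] by simp

lemma adjoint_sum:
  fixes T :: "'a::chilbert \<Rightarrow> 'b::cinner_space"
  assumes T: "bounded_clinear T"
  shows "adjoint T (\<Sum>i\<in>I. f i) = (\<Sum>i\<in>I. adjoint T (f i))"
  by (induction I rule: infinite_finite_induct) (auto simp: adjoint_add[OF T] adjoint_zero[OF T])

lemma tendsto_cinner_left:
  fixes X :: "nat \<Rightarrow> 'a::cinner_space"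
  assumes "X \<longlonglongrightarrow> l"
  shows "(\<lambda>n. cinner (X n) v) \<longlonglongrightarrow> cinner l v"
proof -
  have bl: "bounded_linear (\<lambda>x. cinner x v)"
  proof (rule bounded_linear_intro)
    show "cinner (x + y) v = cinner x v + cinner y v" for x y by (rule cinner_add_left)
    show "cinner (r *\<^sub>R x) v = r *\<^sub>R cinner x v" for r x
      by (simp add: cinner_scaleR_left scaleR_conv_of_real)
    show "norm (cinner x v) \<le> norm x * norm v" for x by (rule cauchy_schwarz)
  qed
  show ?thesis by (rule bounded_linear.tendsto[OF bl assms])
qed

definition comb :: "('p \<Rightarrow> 'a::cinner_space) \<Rightarrow> 'p set \<Rightarrow> ('p \<Rightarrow> complex) \<Rightarrow> 'a" where
  "comb w F c = (\<Sum>p\<in>F. c p *\<^sub>C w p)"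

definition extc :: "('p \<Rightarrow> complex) \<Rightarrow> 'p set \<Rightarrow> 'p \<Rightarrow> complex" where
  "extc c F p = (if p \<in> F then c p else 0)"

lemma comb_ext:
  assumes "finite G" "F \<subseteq> G"
  shows "comb w F c = comb w G (extc c F)"
proof -
  have "comb w G (extc c F) = (\<Sum>p\<in>G. extc c F p *\<^sub>C w p)" by (simp add: comb_def)
  also have "\<dots> = (\<Sum>p\<in>F. extc c F p *\<^sub>C w p)"
    by (rule sum.mono_neutral_right[OF assms]) (auto simp: extc_def)
  also have "\<dots> = comb w F c" unfolding comb_def by (rule sum.cong) (auto simp: extc_def)
  finally show ?thesis by simp
qed

lemma comb_lin:
  assumes "finite F" "finite G"
  shows "a *\<^sub>C comb w F c + b *\<^sub>C comb w G d
       = comb w (F \<union> G) (\<lambda>p. a * extc c F p + b * extc d G p)"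
proof -
  have fu: "finite (F \<union> G)" using assms by simp
  have "a *\<^sub>C comb w F c + b *\<^sub>C comb w G d
      = a *\<^sub>C comb w (F \<union> G) (extc c F) + b *\<^sub>C comb w (F \<union> G) (extc d G)"
    using comb_ext[OF fu, of F w c] comb_ext[OF fu, of G w d] by simp
  also have "\<dots> = comb w (F \<union> G) (\<lambda>p. a * extc c F p + b * extc d G p)"
    unfolding comb_def by (simp add: cscale_sum_right cscale_cscale cscale_add_left sum.distrib)
  finally show ?thesis .
qed

lemma cinner_comb_comb:
  "cinner (comb w F c) (comb w F c) = (\<Sum>p\<in>F. \<Sum>q\<in>F. c p * cnj (c q) * cinner (w p) (w q))"
proof -
  have "cinner (comb w F c) (comb w F c) = (\<Sum>p\<in>F. c p * cinner (w p) (comb w F c))"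
    unfolding comb_def[of w F c] by (simp only: cinner_sum_left cinner_cscale_left)
  also have "\<dots> = (\<Sum>p\<in>F. c p * (\<Sum>q\<in>F. cnj (c q) * cinner (w p) (w q)))"
    unfolding comb_def by (simp only: cinner_sum_right cinner_cscale_right)
  also have "\<dots> = (\<Sum>p\<in>F. \<Sum>q\<in>F. c p * cnj (c q) * cinner (w p) (w q))"
    by (simp only: sum_distrib_left mult.assoc)
  finally show ?thesis .
qed

lemma cinner_comb_left:
  "cinner (comb w F c) v = (\<Sum>p\<in>F. c p * cinner (w p) v)"
  unfolding comb_def by (simp add: cinner_sum_left cinner_cscale_left)

lemma gram_ext_exists:
  fixes w1 :: "'p \<Rightarrow> 'a::chilbert" and w2 :: "'p \<Rightarrow> 'b::chilbert"
  assumes gram: "\<And>p q. p \<in> P \<Longrightarrow> q \<in> P \<Longrightarrow> cinner (w1 p) (w1 q) = cinner (w2 p) (w2 q)"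
    and o1: "\<And>x. (\<forall>p\<in>P. cinner x (w1 p) = 0) \<Longrightarrow> x = 0"
  shows "\<exists>x2. (\<forall>q\<in>P. cinner x2 (w2 q) = cinner x (w1 q)) \<and> norm x2 = norm x"
proof -
  have normeq: "norm (comb w1 F c) = norm (comb w2 F c)" if "F \<subseteq> P" for F c
  proof -
    have "cinner (comb w1 F c) (comb w1 F c) = cinner (comb w2 F c) (comb w2 F c)"
      unfolding cinner_comb_comb using that gram by (intro sum.cong refl) (auto)
    then have "(norm (comb w1 F c))\<^sup>2 = (norm (comb w2 F c))\<^sup>2" by (simp add: norm_sq_cinner)
    then show ?thesis by (simp add: power2_eq_iff_nonneg)
  qed
  have inner_eq: "cinner (comb w2 F c) (w2 q) = cinner (comb w1 F c) (w1 q)"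
    if "F \<subseteq> P" "q \<in> P" for F c q
    unfolding cinner_comb_left using that gram by (intro sum.cong refl) auto
  define M where "M = {x. \<forall>e>0. \<exists>F c. finite F \<and> F \<subseteq> P \<and> norm (x - comb w1 F c) < e}"
  have Mget: "\<exists>F c. finite F \<and> F \<subseteq> P \<and> norm (x - comb w1 F c) < e" if "x \<in> M" "e > 0" for x e
    using that unfolding M_def by blast
  have M0: "0 \<in> M" unfolding M_def by (intro CollectI allI impI exI[of _ "{}"]) (auto simp: comb_def)
  have Madd: "x + y \<in> M" if "x \<in> M" "y \<in> M" for x y
  proof -
    have "\<exists>F c. finite F \<and> F \<subseteq> P \<and> norm (x + y - comb w1 F c) < e" if e: "e > 0" for e
    proof -
      obtain F c where F: "finite F" "F \<subseteq> P" "norm (x - comb w1 F c) < e/2"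
        using Mget[OF \<open>x \<in> M\<close>, of "e/2"] e by auto
      obtain G d where G: "finite G" "G \<subseteq> P" "norm (y - comb w1 G d) < e/2"
        using Mget[OF \<open>y \<in> M\<close>, of "e/2"] e by auto
      have eq: "comb w1 F c + comb w1 G d = comb w1 (F \<union> G) (\<lambda>p. 1 * extc c F p + 1 * extc d G p)"
        using comb_lin[OF F(1) G(1), of 1 w1 c 1 d] by (simp add: cscale_one)
      have "norm (x + y - (comb w1 F c + comb w1 G d)) \<le> norm (x - comb w1 F c) + norm (y - comb w1 G d)"
        by (rule order_trans[OF _ norm_triangle_ineq]) (simp add: algebra_simps)
      then show ?thesis using F G eq
        by (intro exI[of _ "F \<union> G"] exI[of _ "\<lambda>p. 1 * extc c F p + 1 * extc d G p"]) auto
    qed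
    then show ?thesis unfolding M_def by blast
  qed
  have Msc: "a *\<^sub>C x \<in> M" if "x \<in> M" for a x
  proof -
    have "\<exists>F c. finite F \<and> F \<subseteq> P \<and> norm (a *\<^sub>C x - comb w1 F c) < e" if e: "e > 0" for e
    proof -
      have pa: "cmod a + 1 > 0" using norm_ge_zero[of a] by linarith
      have e': "e / (cmod a + 1) > 0" using e pa by (rule divide_pos_pos)
      obtain F c where F: "finite F" "F \<subseteq> P" "norm (x - comb w1 F c) < e / (cmod a + 1)"
        using Mget[OF \<open>x \<in> M\<close> e'] by blast
      have eq: "a *\<^sub>C comb w1 F c = comb w1 F (\<lambda>p. a * c p)"
        unfolding comb_def by (simp add: cscale_sum_right cscale_cscale)
      have "norm (a *\<^sub>C x - a *\<^sub>C comb w1 F c) = cmod a * norm (x - comb w1 F c)"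
        by (simp add: cscale_diff_right[symmetric] norm_cscale)
      also have "\<dots> \<le> (cmod a + 1) * norm (x - comb w1 F c)" by (simp add: mult_right_mono)
      also have "\<dots> < (cmod a + 1) * (e / (cmod a + 1))"
        using F(3) pa by (intro mult_strict_left_mono) auto
      also have "\<dots> = e" using pa by simp
      finally show ?thesis using F eq by (intro exI[of _ F] exI[of _ "\<lambda>p. a * c p"]) auto
    qed
    then show ?thesis unfolding M_def by blast
  qed
  have Mcl: "closed M"
  proof (rule closed_sequential_limits[THEN iffD2], intro allI impI, elim conjE)
    fix s l assume sM: "\<forall>n. s n \<in> M" and sl: "s \<longlonglongrightarrow> l"
    have "\<exists>F c. finite F \<and> F \<subseteq> P \<and> norm (l - comb w1 F c) < e" if e: "e > 0" for e
    proof -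
      obtain N where N: "norm (s N - l) < e/2"
        using LIMSEQ_D[OF sl, of "e/2"] e by auto
      obtain F c where F: "finite F" "F \<subseteq> P" "norm (s N - comb w1 F c) < e/2"
        using Mget[OF sM[rule_format, of N], of "e/2"] e by auto
      have "norm (l - comb w1 F c) \<le> norm (s N - comb w1 F c) + norm (s N - l)"
        by (rule order_trans[OF _ norm_triangle_ineq4[of "s N - comb w1 F c" "s N - l"]]) (simp add: algebra_simps)
      then show ?thesis using N F by (intro exI[of _ F] exI[of _ c]) auto
    qed
    then show "l \<in> M" unfolding M_def by blast
  qed
  have wM: "w1 q \<in> M" if "q \<in> P" for q
  proof -
    have "comb w1 {q} (\<lambda>_. 1) = w1 q" by (simp add: comb_def cscale_one)
    then show ?thesis unfolding M_def using that by (intro CollectI allI impI exI[of _ "{q}"] exI[of _ "\<lambda>_. 1"]) auto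
  qed
  have allM: "x \<in> M" for x
  proof -
    obtain m where m: "m \<in> M" "\<And>z. z \<in> M \<Longrightarrow> cinner (x - m) z = 0"
      using projection_exists[OF Mcl, of x] M0 Madd Msc unfolding csubspace_def by blast
    have "x - m = 0" using o1[of "x - m"] m(2) wM by blast
    then show ?thesis using m(1) by simp
  qed
  have "\<forall>n. \<exists>F c. finite F \<and> F \<subseteq> P \<and> norm (x - comb w1 F c) < 1 / real (Suc n)"
    using allM[of x] unfolding M_def by simp
  then obtain Fs cs where Fs: "\<And>n. finite (Fs n)" "\<And>n. Fs n \<subseteq> P"
    and app: "\<And>n. norm (x - comb w1 (Fs n) (cs n)) < 1 / real (Suc n)"
    by metis
  define a where "a n = comb w1 (Fs n) (cs n)" for n
  define b where "b n = comb w2 (Fs n) (cs n)" for n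
  have dab: "norm (b i - b j) = norm (a i - a j)" for i j
  proof -
    have "a i - a j = comb w1 (Fs i \<union> Fs j) (\<lambda>p. 1 * extc (cs i) (Fs i) p + (-1) * extc (cs j) (Fs j) p)"
      unfolding a_def using comb_lin[OF Fs(1)[of i] Fs(1)[of j], of 1 w1 "cs i" "-1" "cs j"]
      by (simp add: cscale_one cscale_minus_left)
    moreover have "b i - b j = comb w2 (Fs i \<union> Fs j) (\<lambda>p. 1 * extc (cs i) (Fs i) p + (-1) * extc (cs j) (Fs j) p)"
      unfolding b_def using comb_lin[OF Fs(1)[of i] Fs(1)[of j], of 1 w2 "cs i" "-1" "cs j"]
      by (simp add: cscale_one cscale_minus_left)
    moreover have "Fs i \<union> Fs j \<subseteq> P" using Fs(2) by auto
    ultimately show ?thesis using normeq by metis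
  qed
  have "Cauchy b"
  proof (rule CauchyI)
    fix e :: real assume e: "0 < e"
    obtain N :: nat where N: "2 / e < real N" using reals_Archimedean2 by blast
    show "\<exists>N. \<forall>i\<ge>N. \<forall>j\<ge>N. norm (b i - b j) < e"
    proof (intro exI allI impI)
      fix i j assume ij: "N \<le> i" "N \<le> j"
      have "norm (a i - a j) \<le> norm (x - a j) + norm (x - a i)"
        by (rule order_trans[OF _ norm_triangle_ineq4[of "x - a j" "x - a i"]]) (simp add: algebra_simps)
      moreover have "1 / real (Suc i) \<le> 1 / real (Suc N)" using ij by (simp add: frac_le)
      moreover have "1 / real (Suc j) \<le> 1 / real (Suc N)" using ij by (simp add: frac_le)
      moreover have "2 < real N * e" using N e by (simp add: pos_divide_less_eq)
      then have "2 < real (Suc N) * e" using e by (simp add: algebra_simps)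
      then have "2 / real (Suc N) < e" by (simp add: pos_divide_less_eq mult.commute)
      ultimately show "norm (b i - b j) < e" using app[of i] app[of j] dab[of i j]
        unfolding a_def by linarith
    qed
  qed
  then obtain x2 where bx2: "b \<longlonglongrightarrow> x2" using Cauchy_convergent convergent_def by blast
  have ax: "a \<longlonglongrightarrow> x"
  proof -
    have "(\<lambda>n. 1 / real (Suc n)) \<longlonglongrightarrow> 0"
      using LIMSEQ_inverse_real_of_nat by (simp add: inverse_eq_divide)
    then have "(\<lambda>n. norm (a n - x)) \<longlonglongrightarrow> 0"
      by (rule Lim_null_comparison[rotated]) (use app in \<open>auto simp: a_def norm_minus_commute less_imp_le\<close>)
    then show ?thesis by (simp add: LIM_zero_iff tendsto_norm_zero_iff)
  qed
  have "\<forall>q\<in>P. cinner x2 (w2 q) = cinner x (w1 q)"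
  proof
    fix q assume q: "q \<in> P"
    have "(\<lambda>n. cinner (b n) (w2 q)) \<longlonglongrightarrow> cinner x2 (w2 q)" by (rule tendsto_cinner_left[OF bx2])
    moreover have "(\<lambda>n. cinner (b n) (w2 q)) = (\<lambda>n. cinner (a n) (w1 q))"
      unfolding a_def b_def using inner_eq Fs(2) q by auto
    moreover have "(\<lambda>n. cinner (a n) (w1 q)) \<longlonglongrightarrow> cinner x (w1 q)" by (rule tendsto_cinner_left[OF ax])
    ultimately show "cinner x2 (w2 q) = cinner x (w1 q)" using LIMSEQ_unique by metis
  qed
  moreover have "norm x2 = norm x"
  proof -
    have "(\<lambda>n. norm (b n)) \<longlonglongrightarrow> norm x2" by (rule tendsto_norm[OF bx2])
    moreover have "(\<lambda>n. norm (b n)) = (\<lambda>n. norm (a n))"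
      unfolding a_def b_def using normeq Fs(2) by auto
    moreover have "(\<lambda>n. norm (a n)) \<longlonglongrightarrow> norm x" by (rule tendsto_norm[OF ax])
    ultimately show ?thesis using LIMSEQ_unique by metis
  qed
  ultimately show ?thesis by blast
qed


lemma gram_unitary:
  fixes w1 :: "'p \<Rightarrow> 'a::chilbert" and w2 :: "'p \<Rightarrow> 'b::chilbert"
  assumes gram: "\<And>p q. p \<in> P \<Longrightarrow> q \<in> P \<Longrightarrow> cinner (w1 p) (w1 q) = cinner (w2 p) (w2 q)"
    and o1: "\<And>x. (\<forall>p\<in>P. cinner x (w1 p) = 0) \<Longrightarrow> x = 0"
    and o2: "\<And>x. (\<forall>p\<in>P. cinner x (w2 p) = 0) \<Longrightarrow> x = 0"
  shows "\<exists>U. unitary U \<and> (\<forall>x. \<forall>p\<in>P. cinner (U x) (w2 p) = cinner x (w1 p))"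
proof -
  have gram': "\<And>p q. p \<in> P \<Longrightarrow> q \<in> P \<Longrightarrow> cinner (w2 p) (w2 q) = cinner (w1 p) (w1 q)"
    using gram by simp
  define U where "U x = (SOME x2. (\<forall>q\<in>P. cinner x2 (w2 q) = cinner x (w1 q)) \<and> norm x2 = norm x)" for x
  define V where "V x = (SOME x2. (\<forall>q\<in>P. cinner x2 (w1 q) = cinner x (w2 q)) \<and> norm x2 = norm x)" for x
  have U: "(\<forall>q\<in>P. cinner (U x) (w2 q) = cinner x (w1 q)) \<and> norm (U x) = norm x" for x
    unfolding U_def by (rule someI_ex[OF gram_ext_exists[OF gram o1]])
  have V: "(\<forall>q\<in>P. cinner (V x) (w1 q) = cinner x (w2 q)) \<and> norm (V x) = norm x" for x
    unfolding V_def by (rule someI_ex[OF gram_ext_exists[OF gram' o2]])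
  have Uadd: "U (x + y) = U x + U y" for x y
  proof -
    have "U (x + y) - (U x + U y) = 0"
      by (rule o2) (use U in \<open>simp add: cinner_diff_left cinner_add_left\<close>)
    then show ?thesis by simp
  qed
  have Usc: "U (c *\<^sub>C x) = c *\<^sub>C U x" for c x
  proof -
    have "U (c *\<^sub>C x) - c *\<^sub>C U x = 0"
      by (rule o2) (use U in \<open>simp add: cinner_diff_left cinner_cscale_left\<close>)
    then show ?thesis by simp
  qed
  have Unorm: "norm (U x) = norm x" for x using U by blast
  have bc: "bounded_clinear U" unfolding bounded_clinear_def
    using Uadd Usc Unorm by (metis mult.right_neutral order_refl)
  have Udiff: "U (x - y) = U x - U y" for x y by (rule bclin_diff[OF bc])
  have inj: "inj U"
  proof (rule injI)
    fix x y assume "U x = U y"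
    then have "norm (U (x - y)) = 0" by (simp add: Udiff)
    then show "x = y" using Unorm by simp
  qed
  have surj: "surj U"
  proof -
    have "U (V z) = z" for z
    proof -
      have "U (V z) - z = 0"
        by (rule o2) (use U V in \<open>simp add: cinner_diff_left\<close>)
      then show ?thesis by simp
    qed
    then show ?thesis by (metis surjI)
  qed
  have "unitary U" unfolding unitary_def using bc inj surj Unorm by (simp add: bij_def)
  then show ?thesis using U by blast
qed

lemma tendsto_cinner_left_F:
  fixes X :: "'b \<Rightarrow> 'a::cinner_space"
  assumes "(X \<longlongrightarrow> l) F"
  shows "((\<lambda>n. cinner (X n) v) \<longlongrightarrow> cinner l v) F"
proof -
  have bl: "bounded_linear (\<lambda>x. cinner x v)"
  proof (rule bounded_linear_intro)
    show "cinner (x + y) v = cinner x v + cinner y v" for x y by (rule cinner_add_left)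
    show "cinner (r *\<^sub>R x) v = r *\<^sub>R cinner x v" for r x
      by (simp add: cinner_scaleR_left scaleR_conv_of_real)
    show "norm (cinner x v) \<le> norm x * norm v" for x by (rule cauchy_schwarz)
  qed
  show ?thesis by (rule bounded_linear.tendsto[OF bl assms])
qed

lemma bclin_pos_bound: "bounded_clinear T \<Longrightarrow> \<exists>K>0. \<forall>x. norm (T x) \<le> norm x * K"
proof -
  assume "bounded_clinear T"
  then obtain K where K: "\<forall>x. norm (T x) \<le> norm x * K" using bclin_bound by blast
  have "norm (T x) \<le> norm x * (\<bar>K\<bar> + 1)" for x
  proof -
    have "norm x * K \<le> norm x * (\<bar>K\<bar> + 1)" by (intro mult_left_mono) auto
    then show ?thesis using K by (meson order_trans)
  qed
  then show ?thesis by (intro exI[of _ "\<bar>K\<bar> + 1"]) auto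
qed

lemma deriv_inv:
  fixes P0 Q :: "'a::cinner_space \<Rightarrow> 'a" and C :: "'a \<Rightarrow> 'y::cinner_space"
  assumes P0: "bounded_clinear P0" and Q: "bounded_clinear Q" and C: "bounded_clinear C"
    and bij_ev: "eventually (\<lambda>t. bij (\<lambda>x. P0 x - t *\<^sub>C Q x)) (at t0)"
    and bij0: "bij (\<lambda>x. P0 x - t0 *\<^sub>C Q x)"
    and m: "m > 0" and below: "\<And>x. m * norm x \<le> norm (P0 x - t0 *\<^sub>C Q x)"
  shows "((\<lambda>t. cinner (C (inv (\<lambda>x. P0 x - t *\<^sub>C Q x) v)) y) has_field_derivative
           cinner (C (inv (\<lambda>x. P0 x - t0 *\<^sub>C Q x) (Q (inv (\<lambda>x. P0 x - t0 *\<^sub>C Q x) v)))) y) (at t0)"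
proof -
  define T where "T t = (\<lambda>x. P0 x - t *\<^sub>C Q x)" for t
  define R where "R t = inv (T t)" for t
  obtain KQ where KQ: "KQ > 0" "\<And>x. norm (Q x) \<le> norm x * KQ" using bclin_pos_bound[OF Q] by blast
  have Tdiff: "T t (a - b) = T t a - T t b" for t a b
    unfolding T_def by (simp add: bclin_diff[OF P0] bclin_diff[OF Q] cscale_diff_right algebra_simps)
  have Tsc: "T t (c *\<^sub>C a) = c *\<^sub>C T t a" for t c a
    unfolding T_def by (simp add: bclin_scale[OF P0] bclin_scale[OF Q] cscale_diff_right cscale_cscale mult.commute)
  have TR: "bij (T t) \<Longrightarrow> T t (R t u) = u" for t u
    unfolding R_def by (meson bij_inv_eq_iff)
  have RT: "bij (T t) \<Longrightarrow> R t (T t u) = u" for t u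
    unfolding R_def by (simp add: bij_is_inj)
  have bijT0: "bij (T t0)" using bij0 by (simp add: T_def)
  have resolv: "R t u - R t0 u = (t - t0) *\<^sub>C R t (Q (R t0 u))" if bt: "bij (T t)" for t u
  proof -
    have "T t (R t0 u) = T t0 (R t0 u) - (t - t0) *\<^sub>C Q (R t0 u)"
      unfolding T_def by (simp add: cscale_diff_left algebra_simps)
    then have e1: "T t (R t0 u) = u - (t - t0) *\<^sub>C Q (R t0 u)" using TR[OF bijT0] by simp
    have "T t (R t u - R t0 u) = (t - t0) *\<^sub>C Q (R t0 u)"
      by (simp add: Tdiff TR[OF bt] e1)
    also have "\<dots> = T t ((t - t0) *\<^sub>C R t (Q (R t0 u)))" by (simp add: Tsc TR[OF bt])
    finally show ?thesis using bt by (metis RT)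
  qed
  have ev_small: "eventually (\<lambda>t. cmod (t - t0) * KQ < m / 2) (at t0)"
  proof -
    have "((\<lambda>t. cmod (t - t0) * KQ) \<longlongrightarrow> cmod (t0 - t0) * KQ) (at t0)"
      by (intro tendsto_intros)
    then have "((\<lambda>t. cmod (t - t0) * KQ) \<longlongrightarrow> 0) (at t0)" by simp
    then show ?thesis using m by (intro order_tendstoD(2)) auto
  qed
  have Rbound: "norm (R t u) \<le> (2 / m) * norm u"
    if bt: "bij (T t)" and sm: "cmod (t - t0) * KQ < m / 2" for t u
  proof -
    define x where "x = R t u"
    have "T t x = T t0 x - (t - t0) *\<^sub>C Q x" unfolding T_def by (simp add: cscale_diff_left algebra_simps)
    then have "norm (T t0 x) \<le> norm (T t x) + cmod (t - t0) * norm (Q x)"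
      by (metis add_diff_cancel_left' diff_add_cancel norm_cscale norm_triangle_ineq)
    moreover have "cmod (t - t0) * norm (Q x) \<le> cmod (t - t0) * (norm x * KQ)"
      using KQ(2) by (simp add: mult_left_mono)
    moreover have "cmod (t - t0) * (norm x * KQ) \<le> m / 2 * norm x"
    proof -
      have "cmod (t - t0) * (norm x * KQ) = (cmod (t - t0) * KQ) * norm x" by (simp add: algebra_simps)
      also have "\<dots> \<le> m / 2 * norm x" using sm by (intro mult_right_mono) auto
      finally show ?thesis .
    qed
    moreover have "m * norm x \<le> norm (T t0 x)" using below unfolding T_def by simp
    ultimately have "m / 2 * norm x \<le> norm (T t x)" by linarith
    then have "m / 2 * norm x \<le> norm u" unfolding x_def using TR[OF bt] by simp
    then show ?thesis unfolding x_def[symmetric] using m by (simp add: field_simps)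
  qed
  have Rcont: "((\<lambda>t. R t z) \<longlongrightarrow> R t0 z) (at t0)" for z
  proof -
    have ev: "eventually (\<lambda>t. norm (R t z - R t0 z) \<le> cmod (t - t0) * ((2 / m) * norm (Q (R t0 z)))) (at t0)"
      using bij_ev ev_small
    proof eventually_elim
      case (elim t)
      then have bt: "bij (T t)" by (simp add: T_def)
      have "norm (R t z - R t0 z) = cmod (t - t0) * norm (R t (Q (R t0 z)))"
        by (simp add: resolv[OF bt] norm_cscale)
      also have "\<dots> \<le> cmod (t - t0) * ((2 / m) * norm (Q (R t0 z)))"
        by (intro mult_left_mono Rbound bt elim(2)) auto
      finally show ?case .
    qed
    have "((\<lambda>t. cmod (t - t0) * ((2 / m) * norm (Q (R t0 z)))) \<longlongrightarrow> cmod (t0 - t0) * ((2 / m) * norm (Q (R t0 z)))) (at t0)"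
      by (intro tendsto_intros)
    then have "((\<lambda>t. cmod (t - t0) * ((2 / m) * norm (Q (R t0 z)))) \<longlongrightarrow> 0) (at t0)" by simp
    from Lim_null_comparison[OF ev this] show ?thesis by (simp add: LIM_zero_iff)
  qed
  define w where "w = Q (R t0 v)"
  have lim: "((\<lambda>t. cinner (C (R t w)) y) \<longlongrightarrow> cinner (C (R t0 w)) y) (at t0)"
    by (intro tendsto_cinner_left_F bounded_linear.tendsto[OF bclin_real[OF C]] Rcont)
  have "((\<lambda>t. (cinner (C (R t v)) y - cinner (C (R t0 v)) y) / (t - t0)) \<longlongrightarrow> cinner (C (R t0 w)) y) (at t0)"
  proof (rule Lim_transform_eventually[OF lim])
    have "eventually (\<lambda>t. t \<noteq> t0) (at t0)" by (simp add: eventually_at_filter)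
    then show "eventually (\<lambda>t. cinner (C (R t w)) y = (cinner (C (R t v)) y - cinner (C (R t0 v)) y) / (t - t0)) (at t0)"
      using bij_ev
    proof eventually_elim
      case (elim t)
      then have bt: "bij (T t)" by (simp add: T_def)
      have "cinner (C (R t v)) y - cinner (C (R t0 v)) y = cinner (C (R t v - R t0 v)) y"
        by (simp add: bclin_diff[OF C] cinner_diff_left)
      also have "\<dots> = (t - t0) * cinner (C (R t w)) y"
        by (simp add: resolv[OF bt] bclin_scale[OF C] cinner_cscale_left w_def)
      finally show ?case using elim(1) by simp
    qed
  qed
  then show ?thesis unfolding has_field_derivative_iff R_def T_def w_def by simp
qed

definition Nsq :: "('d::finite \<Rightarrow> complex) \<Rightarrow> real" where
  "Nsq l = (\<Sum>j\<in>UNIV. (cmod (l j))\<^sup>2)"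

lemma ballB_Nsq: "l \<in> ballB \<longleftrightarrow> Nsq l < 1"
  by (simp add: ballB_def Nsq_def)

lemma Nsq_nonneg: "0 \<le> Nsq l"
  unfolding Nsq_def by (intro sum_nonneg) auto

lemma sum_cmod_mult_le: "(\<Sum>j\<in>UNIV. cmod (a j) * f j) \<le> sqrt (Nsq a) * sqrt (\<Sum>j\<in>UNIV. (f j)\<^sup>2)"
  if "\<And>j. f j \<ge> 0" for a :: "'d::finite \<Rightarrow> complex"
proof -
  have "(\<Sum>j\<in>UNIV. cmod (a j) * f j) = (\<Sum>j\<in>UNIV. \<bar>cmod (a j)\<bar> * \<bar>f j\<bar>)"
    using that by simp
  also have "\<dots> \<le> L2_set (\<lambda>j. cmod (a j)) UNIV * L2_set f UNIV" by (rule L2_set_mult_ineq)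
  also have "\<dots> = sqrt (Nsq a) * sqrt (\<Sum>j\<in>UNIV. (f j)\<^sup>2)" by (simp add: L2_set_def Nsq_def)
  finally show ?thesis .
qed

lemma cdot_bound:
  fixes l m :: "'d::finite \<Rightarrow> complex"
  shows "cmod (cdot l m) \<le> sqrt (Nsq l) * sqrt (Nsq m)"
proof -
  have "cmod (cdot l m) \<le> (\<Sum>j\<in>UNIV. cmod (l j * cnj (m j)))" unfolding cdot_def by (rule norm_sum)
  also have "\<dots> = (\<Sum>j\<in>UNIV. cmod (l j) * cmod (m j))" by (simp add: norm_mult)
  also have "\<dots> \<le> sqrt (Nsq l) * sqrt (\<Sum>j\<in>UNIV. (cmod (m j))\<^sup>2)" by (rule sum_cmod_mult_le) simp
  finally show ?thesis by (simp add: Nsq_def)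
qed

lemma cdot_lt1: "l \<in> ballB \<Longrightarrow> m \<in> ballB \<Longrightarrow> cmod (cdot l m) < 1"
proof -
  assume "l \<in> ballB" "m \<in> ballB"
  then have a: "sqrt (Nsq l) < 1" "sqrt (Nsq m) < 1" by (auto simp: ballB_Nsq)
  have "sqrt (Nsq l) * sqrt (Nsq m) < 1"
    using a by (metis less_eq_real_def mult_less_cancel_right2 mult_nonneg_nonneg order.strict_trans2 real_sqrt_ge_zero Nsq_nonneg mult_strict_mono' zero_le_one mult_1_right real_sqrt_lt_1_iff)
  then show ?thesis using cdot_bound[of l m] by linarith
qed

lemma cont_upd: "continuous_on UNIV (\<lambda>t::complex. (\<mu>(j := \<mu> j + t)) i)"
  by (cases "i = j") (simp_all add: continuous_intros)

lemma open_ball_pre: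
  fixes g :: "complex \<Rightarrow> ('d::finite \<Rightarrow> complex)"
  assumes "\<And>i. continuous_on UNIV (\<lambda>t. g t i)"
  shows "open {t. g t \<in> ballB}"
proof -
  have "continuous_on UNIV (\<lambda>t. Nsq (g t))"
    unfolding Nsq_def by (intro continuous_intros assms)
  then have "open {t. Nsq (g t) < 1}" by (intro open_Collect_less continuous_intros) auto
  then show ?thesis by (simp add: ballB_Nsq)
qed


lemma nq:
  fixes v1 v2 :: "'a::cinner_space"
  shows "(norm (c1 *\<^sub>C v1 + c2 *\<^sub>C v2))\<^sup>2
     = (cmod c1)\<^sup>2 * (norm v1)\<^sup>2 + (cmod c2)\<^sup>2 * (norm v2)\<^sup>2 + 2 * Re (c1 * cnj c2 * cinner v1 v2)"
proof -
  have "(norm (c1 *\<^sub>C v1 + c2 *\<^sub>C v2))\<^sup>2 = (norm (c1 *\<^sub>C v1))\<^sup>2 + (norm (c2 *\<^sub>C v2))\<^sup>2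
      + 2 * Re (cinner (c1 *\<^sub>C v1) (c2 *\<^sub>C v2))" by (rule norm_add_sq)
  also have "cinner (c1 *\<^sub>C v1) (c2 *\<^sub>C v2) = c1 * cnj c2 * cinner v1 v2"
    by (simp add: cinner_cscale_left cinner_cscale_right ac_simps)
  finally show ?thesis by (simp only: norm_cscale power_mult_distrib)
qed

lemma sumj_expand:
  fixes a1 a2 :: "'a::cinner_space" and l1 l2 :: "'d::finite \<Rightarrow> complex"
  shows "(\<Sum>j\<in>UNIV. (norm (c1 *\<^sub>C (cnj (l1 j) *\<^sub>C a1) + c2 *\<^sub>C (cnj (l2 j) *\<^sub>C a2)))\<^sup>2)
    = (cmod c1)\<^sup>2 * (norm a1)\<^sup>2 * Nsq l1 + (cmod c2)\<^sup>2 * (norm a2)\<^sup>2 * Nsq l2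
      + 2 * Re (c1 * cnj c2 * cinner a1 a2 * cdot l2 l1)"
proof -
  have t: "(norm (c1 *\<^sub>C (cnj (l1 j) *\<^sub>C a1) + c2 *\<^sub>C (cnj (l2 j) *\<^sub>C a2)))\<^sup>2
    = (cmod c1)\<^sup>2 * (norm a1)\<^sup>2 * (cmod (l1 j))\<^sup>2 + (cmod c2)\<^sup>2 * (norm a2)\<^sup>2 * (cmod (l2 j))\<^sup>2
      + 2 * Re (c1 * cnj c2 * cinner a1 a2 * (l2 j * cnj (l1 j)))" for j
  proof -
    have "(norm (c1 *\<^sub>C (cnj (l1 j) *\<^sub>C a1) + c2 *\<^sub>C (cnj (l2 j) *\<^sub>C a2)))\<^sup>2
       = (norm ((c1 * cnj (l1 j)) *\<^sub>C a1 + (c2 * cnj (l2 j)) *\<^sub>C a2))\<^sup>2" by (simp add: cscale_cscale)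
    also have "\<dots> = (cmod (c1 * cnj (l1 j)))\<^sup>2 * (norm a1)\<^sup>2 + (cmod (c2 * cnj (l2 j)))\<^sup>2 * (norm a2)\<^sup>2
        + 2 * Re (c1 * cnj (l1 j) * cnj (c2 * cnj (l2 j)) * cinner a1 a2)" by (rule nq)
    also have "c1 * cnj (l1 j) * cnj (c2 * cnj (l2 j)) * cinner a1 a2 = c1 * cnj c2 * cinner a1 a2 * (l2 j * cnj (l1 j))"
      by (simp add: algebra_simps)
    finally show ?thesis by (simp add: norm_mult power_mult_distrib algebra_simps)
  qed
  have "(\<Sum>j\<in>UNIV. (norm (c1 *\<^sub>C (cnj (l1 j) *\<^sub>C a1) + c2 *\<^sub>C (cnj (l2 j) *\<^sub>C a2)))\<^sup>2)
     = (\<Sum>j\<in>UNIV. (cmod c1)\<^sup>2 * (norm a1)\<^sup>2 * (cmod (l1 j))\<^sup>2) + (\<Sum>j\<in>UNIV. (cmod c2)\<^sup>2 * (norm a2)\<^sup>2 * (cmod (l2 j))\<^sup>2)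
      + (\<Sum>j\<in>UNIV. 2 * Re (c1 * cnj c2 * cinner a1 a2 * (l2 j * cnj (l1 j))))"
    by (simp only: t sum.distrib)
  also have "\<dots> = (cmod c1)\<^sup>2 * (norm a1)\<^sup>2 * Nsq l1 + (cmod c2)\<^sup>2 * (norm a2)\<^sup>2 * Nsq l2
      + 2 * Re (c1 * cnj c2 * cinner a1 a2 * cdot l2 l1)"
  proof -
    have "(\<Sum>j\<in>UNIV. 2 * Re (c1 * cnj c2 * cinner a1 a2 * (l2 j * cnj (l1 j))))
        = 2 * Re (c1 * cnj c2 * cinner a1 a2 * cdot l2 l1)"
      unfolding cdot_def by (simp only: sum_distrib_left[symmetric] Re_sum[symmetric])
    then show ?thesis unfolding Nsq_def by (simp only: sum_distrib_left[symmetric])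
  qed
  finally show ?thesis .
qed

lemma polar_extract:
  fixes a1 a2 :: "'a::cinner_space" and b1 b2 :: "'b::cinner_space" and e1 e2 :: "'c::cinner_space"
    and l1 l2 :: "'d::finite \<Rightarrow> complex"
  assumes h: "\<And>c1 c2. (norm (c1 *\<^sub>C a1 + c2 *\<^sub>C a2))\<^sup>2 + (norm (c1 *\<^sub>C b1 + c2 *\<^sub>C b2))\<^sup>2
      = (\<Sum>j\<in>UNIV. (norm (c1 *\<^sub>C (cnj (l1 j) *\<^sub>C a1) + c2 *\<^sub>C (cnj (l2 j) *\<^sub>C a2)))\<^sup>2)
        + (norm (c1 *\<^sub>C e1 + c2 *\<^sub>C e2))\<^sup>2"
  shows "(1 - cdot l2 l1) * cinner a1 a2 = cinner e1 e2 - cinner b1 b2"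
proof -
  define X1 where "X1 = (norm a1)\<^sup>2 + (norm b1)\<^sup>2 - (norm a1)\<^sup>2 * Nsq l1 - (norm e1)\<^sup>2"
  define X2 where "X2 = (norm a2)\<^sup>2 + (norm b2)\<^sup>2 - (norm a2)\<^sup>2 * Nsq l2 - (norm e2)\<^sup>2"
  define Z where "Z = cinner a1 a2 + cinner b1 b2 - cinner a1 a2 * cdot l2 l1 - cinner e1 e2"
  have q: "(cmod c1)\<^sup>2 * X1 + (cmod c2)\<^sup>2 * X2 + 2 * Re (c1 * cnj c2 * Z) = 0" for c1 c2
  proof -
    define P where "P = c1 * cnj c2"
    define ra where "ra = Re (P * cinner a1 a2)"
    define rb where "rb = Re (P * cinner b1 b2)"
    define rd where "rd = Re (P * cinner a1 a2 * cdot l2 l1)"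
    define re where "re = Re (P * cinner e1 e2)"
    have h': "(cmod c1)\<^sup>2 * (norm a1)\<^sup>2 + (cmod c2)\<^sup>2 * (norm a2)\<^sup>2 + 2 * ra
        + ((cmod c1)\<^sup>2 * (norm b1)\<^sup>2 + (cmod c2)\<^sup>2 * (norm b2)\<^sup>2 + 2 * rb)
      = (cmod c1)\<^sup>2 * (norm a1)\<^sup>2 * Nsq l1 + (cmod c2)\<^sup>2 * (norm a2)\<^sup>2 * Nsq l2 + 2 * rd
        + ((cmod c1)\<^sup>2 * (norm e1)\<^sup>2 + (cmod c2)\<^sup>2 * (norm e2)\<^sup>2 + 2 * re)"
      unfolding ra_def rb_def rd_def re_def P_def by (rule h[of c1 c2, unfolded sumj_expand, unfolded nq])
    have rz: "Re (c1 * cnj c2 * Z) = ra + rb - rd - re"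
      unfolding Z_def ra_def rb_def rd_def re_def P_def by (simp add: algebra_simps)
    show ?thesis unfolding rz X1_def X2_def using h' by (simp add: algebra_simps)
  qed
  have x1: "X1 = 0" using q[of 1 0] by simp
  have x2: "X2 = 0" using q[of 0 1] by simp
  have r: "Re Z = 0" using q[of 1 1] x1 x2 by simp
  have i: "Im Z = 0" using q[of 1 "-\<i>"] x1 x2 by simp
  have "Z = 0" using r i by (simp add: complex_eq_iff)
  then show ?thesis unfolding Z_def by (simp add: algebra_simps)
qed

locale rsys =
  fixes S :: "('d::finite \<Rightarrow> complex) \<Rightarrow> 'u::chilbert \<Rightarrow> 'y::chilbert"
    and A :: "'d \<Rightarrow> 'x::chilbert \<Rightarrow> 'x" and B :: "'d \<Rightarrow> 'u \<Rightarrow> 'x" and C :: "'x \<Rightarrow> 'y"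
    and D :: "'u \<Rightarrow> 'y"
  assumes realz: "is_realization S A B C D" and obs: "observable A C"
    and comm: "commutative_ops A" and wcoi: "weakly_coisometric A B C D"
begin

lemma bcA: "bounded_clinear (A j)" using realz unfolding is_realization_def by blast
lemma bcB: "bounded_clinear (B j)" using realz unfolding is_realization_def by blast
lemma bcC: "bounded_clinear C" using realz unfolding is_realization_def by blast
lemma bcD: "bounded_clinear D" using realz unfolding is_realization_def by blast

definition T :: "('d \<Rightarrow> complex) \<Rightarrow> 'x \<Rightarrow> 'x" where "T l = (\<lambda>x. x - ZA l A x)"
definition Ti :: "('d \<Rightarrow> complex) \<Rightarrow> 'x \<Rightarrow> 'x" where "Ti l = inv (T l)"

lemma bijT: "l \<in> ballB \<Longrightarrow> bij (T l)"
  using realz unfolding is_realization_def T_def by blast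
lemma S_eq: "l \<in> ballB \<Longrightarrow> S l u = D u + C (Ti l (ZB l B u))"
  using realz unfolding is_realization_def T_def Ti_def by blast

lemma T_Ti: "l \<in> ballB \<Longrightarrow> T l (Ti l u) = u"
  unfolding Ti_def using bijT by (meson bij_inv_eq_iff)
lemma Ti_T: "l \<in> ballB \<Longrightarrow> Ti l (T l u) = u"
  unfolding Ti_def using bijT by (simp add: bij_is_inj)

lemma bcZA: "bounded_clinear (ZA l A)"
proof -
  have add: "ZA l A (x + y) = ZA l A x + ZA l A y" for x y
    unfolding ZA_def by (simp add: bclin_add[OF bcA] cscale_add_right sum.distrib)
  have sc: "ZA l A (c *\<^sub>C x) = c *\<^sub>C ZA l A x" for c x
    unfolding ZA_def by (simp add: bclin_scale[OF bcA] cscale_cscale cscale_sum_right mult.commute)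
  have "\<exists>K. \<forall>x. norm (A j x) \<le> norm x * K" for j using bclin_bound[OF bcA] by blast
  then obtain K where K: "\<And>j x. norm (A j x) \<le> norm x * K j" by metis
  have "norm (ZA l A x) \<le> norm x * (\<Sum>j\<in>UNIV. cmod (l j) * K j)" for x
  proof -
    have "norm (ZA l A x) \<le> (\<Sum>j\<in>UNIV. norm (l j *\<^sub>C A j x))" unfolding ZA_def by (rule norm_sum)
    also have "\<dots> = (\<Sum>j\<in>UNIV. cmod (l j) * norm (A j x))" by (simp add: norm_cscale)
    also have "\<dots> \<le> (\<Sum>j\<in>UNIV. cmod (l j) * (norm x * K j))"
      by (intro sum_mono mult_left_mono K) auto
    also have "\<dots> = norm x * (\<Sum>j\<in>UNIV. cmod (l j) * K j)"
      by (simp add: sum_distrib_left algebra_simps)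
    finally show ?thesis .
  qed
  then show ?thesis unfolding bounded_clinear_def using add sc by blast
qed

lemma bcT: "bounded_clinear (T l)"
proof -
  obtain K where K: "\<And>x. norm (ZA l A x) \<le> norm x * K" using bclin_bound[OF bcZA] by blast
  have "norm (T l x) \<le> norm x * (1 + K)" for x
    unfolding T_def using norm_triangle_ineq4[of x "ZA l A x"] K[of x] by (simp add: algebra_simps)
  moreover have "T l (x + y) = T l x + T l y" for x y
    unfolding T_def by (simp add: bclin_add[OF bcZA] algebra_simps)
  moreover have "T l (c *\<^sub>C x) = c *\<^sub>C T l x" for c x
    unfolding T_def by (simp add: bclin_scale[OF bcZA] cscale_diff_right)
  ultimately show ?thesis unfolding bounded_clinear_def by blast
qed

lemma Ti_add: "l \<in> ballB \<Longrightarrow> Ti l (a + b) = Ti l a + Ti l b"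
  by (metis T_Ti Ti_T bclin_add[OF bcT])
lemma Ti_scale: "l \<in> ballB \<Longrightarrow> Ti l (c *\<^sub>C a) = c *\<^sub>C Ti l a"
  by (metis T_Ti Ti_T bclin_scale[OF bcT])
lemma Ti_diff: "l \<in> ballB \<Longrightarrow> Ti l (a - b) = Ti l a - Ti l b"
  by (metis T_Ti Ti_T bclin_diff[OF bcT])

lemma contrA: "(\<Sum>j\<in>UNIV. (norm (A j x))\<^sup>2) \<le> (norm x)\<^sup>2"
proof -
  have "(\<Sum>j\<in>UNIV. (norm (A j x + B j 0))\<^sup>2) + (norm (C x + D 0))\<^sup>2 \<le> (norm x)\<^sup>2 + (norm (0::'u))\<^sup>2"
    using wcoi unfolding weakly_coisometric_def by blast
  then have "(\<Sum>j\<in>UNIV. (norm (A j x))\<^sup>2) + (norm (C x))\<^sup>2 \<le> (norm x)\<^sup>2"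
    by (simp add: bclin_zero[OF bcB] bclin_zero[OF bcD])
  then show ?thesis by (smt (verit) zero_le_power2)
qed

lemma ZA_bound: "norm (ZA l A x) \<le> sqrt (Nsq l) * norm x"
proof -
  have "norm (ZA l A x) \<le> (\<Sum>j\<in>UNIV. norm (l j *\<^sub>C A j x))" unfolding ZA_def by (rule norm_sum)
  also have "\<dots> = (\<Sum>j\<in>UNIV. cmod (l j) * norm (A j x))" by (simp add: norm_cscale)
  also have "\<dots> \<le> sqrt (Nsq l) * sqrt (\<Sum>j\<in>UNIV. (norm (A j x))\<^sup>2)" by (rule sum_cmod_mult_le) simp
  also have "\<dots> \<le> sqrt (Nsq l) * norm x"
  proof -
    have "sqrt (\<Sum>j\<in>UNIV. (norm (A j x))\<^sup>2) \<le> sqrt ((norm x)\<^sup>2)" using contrA by (rule real_sqrt_le_mono)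
    then show ?thesis by (intro mult_left_mono) (auto simp: Nsq_nonneg)
  qed
  finally show ?thesis .
qed

lemma T_below: "(1 - sqrt (Nsq l)) * norm x \<le> norm (T l x)"
proof -
  have "norm x \<le> norm (T l x) + norm (ZA l A x)"
    unfolding T_def using norm_triangle_ineq[of "x - ZA l A x" "ZA l A x"] by simp
  then show ?thesis using ZA_bound[of l x] by (simp add: algebra_simps)
qed

lemma sqrtN_lt1: "l \<in> ballB \<Longrightarrow> sqrt (Nsq l) < 1"
  by (simp add: ballB_Nsq)

lemma Ti_bound: "l \<in> ballB \<Longrightarrow> norm (Ti l u) \<le> norm u / (1 - sqrt (Nsq l))"
proof -
  assume l: "l \<in> ballB"
  have p: "0 < 1 - sqrt (Nsq l)" using sqrtN_lt1[OF l] by simp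
  have "(1 - sqrt (Nsq l)) * norm (Ti l u) \<le> norm u" using T_below[of l "Ti l u"] T_Ti[OF l] by simp
  then show ?thesis using p by (simp add: field_simps)
qed

definition W :: "('d \<Rightarrow> complex) \<Rightarrow> 'x \<Rightarrow> 'x" where
  "W l = (\<lambda>x. x - (\<Sum>j\<in>UNIV. adjoint (A j) (cnj (l j) *\<^sub>C x)))"

lemma T_W: "cinner (T l x) v = cinner x (W l v)"
proof -
  have "cinner (ZA l A x) v = (\<Sum>j\<in>UNIV. cinner x (adjoint (A j) (cnj (l j) *\<^sub>C v)))"
    unfolding ZA_def by (simp add: cinner_sum_left cinner_cscale_left adjoint_prop[OF bcA, symmetric]
        cinner_cscale_right)
  then show ?thesis unfolding T_def W_def by (simp add: cinner_diff_left cinner_diff_right cinner_sum_right)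
qed

lemma W_inj: "l \<in> ballB \<Longrightarrow> W l a = W l b \<Longrightarrow> a = b"
proof -
  assume l: "l \<in> ballB" and e: "W l a = W l b"
  show "a = b"
  proof (rule cinner_ext_right)
    fix z
    have "cinner z a = cinner (T l (Ti l z)) a" by (simp add: T_Ti[OF l])
    also have "\<dots> = cinner (T l (Ti l z)) b" by (simp add: T_W e)
    also have "\<dots> = cinner z b" by (simp add: T_Ti[OF l])
    finally show "cinner z a = cinner z b" .
  qed
qed

lemma W_surj: "l \<in> ballB \<Longrightarrow> \<exists>u. W l u = v"
proof -
  assume l: "l \<in> ballB"
  have p: "0 < 1 - sqrt (Nsq l)" using sqrtN_lt1[OF l] by simp
  have "\<exists>u. \<forall>x. cinner (Ti l x) v = cinner x u"
  proof (rule riesz)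
    show "cinner (Ti l (x + y)) v = cinner (Ti l x) v + cinner (Ti l y) v" for x y
      by (simp add: Ti_add[OF l] cinner_add_left)
    show "cinner (Ti l (c *\<^sub>C x)) v = c * cinner (Ti l x) v" for c x
      by (simp add: Ti_scale[OF l] cinner_cscale_left)
    show "cmod (cinner (Ti l x) v) \<le> norm x * (norm v / (1 - sqrt (Nsq l)))" for x
    proof -
      have "cmod (cinner (Ti l x) v) \<le> norm (Ti l x) * norm v" by (rule cauchy_schwarz)
      also have "\<dots> \<le> norm x / (1 - sqrt (Nsq l)) * norm v"
        by (intro mult_right_mono Ti_bound[OF l]) auto
      finally show ?thesis by simp
    qed
  qed
  then obtain u where u: "\<And>x. cinner (Ti l x) v = cinner x u" by blast
  have "W l u = v"
  proof (rule cinner_ext_right)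
    fix x
    have "cinner x (W l u) = cinner (T l x) u" by (simp add: T_W)
    also have "\<dots> = cinner (Ti l (T l x)) v" by (simp add: u)
    also have "\<dots> = cinner x v" by (simp add: Ti_T[OF l])
    finally show "cinner x (W l u) = cinner x v" .
  qed
  then show ?thesis by blast
qed

lemma bijW: "l \<in> ballB \<Longrightarrow> bij (W l)"
  unfolding bij_def inj_def surj_def using W_inj W_surj by metis

definition w :: "('d \<Rightarrow> complex) \<Rightarrow> 'y \<Rightarrow> 'x" where
  "w l y = inv (W l) (adjoint C y)"

lemma W_w: "l \<in> ballB \<Longrightarrow> W l (w l y) = adjoint C y"
  unfolding w_def using bijW by (meson bij_inv_eq_iff)

lemma key: "l \<in> ballB \<Longrightarrow> cinner x (w l y) = cinner (C (Ti l x)) y"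
proof -
  assume l: "l \<in> ballB"
  have "cinner x (w l y) = cinner (T l (Ti l x)) (w l y)" by (simp add: T_Ti[OF l])
  also have "\<dots> = cinner (Ti l x) (adjoint C y)" by (simp add: T_W W_w[OF l])
  also have "\<dots> = cinner (C (Ti l x)) y" by (simp add: adjoint_prop[OF bcC])
  finally show ?thesis .
qed

lemma obs': "(\<And>l. l \<in> ballB \<Longrightarrow> C (Ti l x) = 0) \<Longrightarrow> x = 0"
  using obs unfolding observable_def Ti_def T_def by blast

lemma orth: "(\<forall>l\<in>ballB. \<forall>y. cinner x (w l y) = 0) \<Longrightarrow> x = 0"
proof -
  assume h: "\<forall>l\<in>ballB. \<forall>y. cinner x (w l y) = 0"
  show "x = 0"
  proof (rule obs')
    fix l :: "'d \<Rightarrow> complex" assume l: "l \<in> ballB"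
    have "cinner (C (Ti l x)) (C (Ti l x)) = 0" using h l key[OF l, of x] by simp
    then show "C (Ti l x) = 0" by simp
  qed
qed

definition sv :: "('d \<Rightarrow> complex) \<Rightarrow> 'y \<Rightarrow> 'u" where
  "sv l y = adjoint D y + (\<Sum>j\<in>UNIV. adjoint (B j) (cnj (l j) *\<^sub>C w l y))"

lemma S_adj: "l \<in> ballB \<Longrightarrow> cinner (S l u) y = cinner u (sv l y)"
proof -
  assume l: "l \<in> ballB"
  have "cinner (C (Ti l (ZB l B u))) y = cinner (ZB l B u) (w l y)" by (simp add: key[OF l])
  also have "\<dots> = (\<Sum>j\<in>UNIV. cinner u (adjoint (B j) (cnj (l j) *\<^sub>C w l y)))"
    unfolding ZB_def by (simp add: cinner_sum_left cinner_cscale_left adjoint_prop[OF bcB, symmetric]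
        cinner_cscale_right)
  finally show ?thesis unfolding sv_def
    by (simp add: S_eq[OF l] cinner_add_left cinner_add_right cinner_sum_right adjoint_prop[OF bcD])
qed

lemma Dgen_eq: "Dgen A C l y = (\<lambda>j. cnj (l j) *\<^sub>C w l y)"
  unfolding Dgen_def w_def W_def Let_def by simp

lemma sumA_w: "l \<in> ballB \<Longrightarrow> (\<Sum>j\<in>UNIV. adjoint (A j) (cnj (l j) *\<^sub>C w l y)) = w l y - adjoint C y"
  using W_w[of l y] unfolding W_def by (simp add: algebra_simps)

lemma pair_in_D:
  assumes l1: "l1 \<in> ballB" and l2: "l2 \<in> ballB"
  shows "(\<lambda>j. c1 *\<^sub>C Dgen A C l1 y1 j + c2 *\<^sub>C Dgen A C l2 y2 j) \<in> Dspace A C"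
  unfolding Dspace_def
proof (intro CollectI allI impI)
  fix e :: real assume e: "e > 0"
  define cc where "cc i = (if i = 0 then c1 else c2)" for i :: nat
  define zz where "zz i = (if i = 0 then l1 else l2)" for i :: nat
  define yy where "yy i = (if i = 0 then y1 else y2)" for i :: nat
  have sumeq: "(\<Sum>i<2. cc i *\<^sub>C Dgen A C (zz i) (yy i) j) = c1 *\<^sub>C Dgen A C l1 y1 j + c2 *\<^sub>C Dgen A C l2 y2 j" for j
    by (simp add: numeral_2_eq_2 cc_def zz_def yy_def)
  moreover have "\<forall>i<2. zz i \<in> ballB" using l1 l2 by (simp add: zz_def)
  note facts = this
  have "(\<forall>i<(2::nat). zz i \<in> ballB) \<and>
       sqrt (\<Sum>j\<in>UNIV. (norm ((c1 *\<^sub>C Dgen A C l1 y1 j + c2 *\<^sub>C Dgen A C l2 y2 j)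
          - (\<Sum>i<2. cc i *\<^sub>C Dgen A C (zz i) (yy i) j)))\<^sup>2) < e"
    unfolding sumeq using facts e by simp
  note fin = this
  show "\<exists>(n::nat) (c::nat \<Rightarrow> complex) (\<zeta>::nat \<Rightarrow> ('d \<Rightarrow> complex)) (y::nat \<Rightarrow> 'y). (\<forall>i<n. \<zeta> i \<in> ballB) \<and>
       sqrt (\<Sum>j\<in>UNIV. (norm ((c1 *\<^sub>C Dgen A C l1 y1 j + c2 *\<^sub>C Dgen A C l2 y2 j)
          - (\<Sum>i<n. c i *\<^sub>C Dgen A C (\<zeta> i) (y i) j)))\<^sup>2) < e"
    apply (rule exI[of _ "2::nat"])
    apply (rule exI[of _ cc])
    apply (rule exI[of _ zz])
    apply (rule exI[of _ yy])
    apply (rule fin)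
    done
qed

lemma coi_pair:
  assumes l1: "l1 \<in> ballB" and l2: "l2 \<in> ballB"
  shows "(norm (c1 *\<^sub>C w l1 y1 + c2 *\<^sub>C w l2 y2))\<^sup>2 + (norm (c1 *\<^sub>C sv l1 y1 + c2 *\<^sub>C sv l2 y2))\<^sup>2
      = (\<Sum>j\<in>UNIV. (norm (c1 *\<^sub>C (cnj (l1 j) *\<^sub>C w l1 y1) + c2 *\<^sub>C (cnj (l2 j) *\<^sub>C w l2 y2)))\<^sup>2)
        + (norm (c1 *\<^sub>C y1 + c2 *\<^sub>C y2))\<^sup>2"
proof -
  define h where "h = (\<lambda>j. c1 *\<^sub>C Dgen A C l1 y1 j + c2 *\<^sub>C Dgen A C l2 y2 j)"
  define yy where "yy = c1 *\<^sub>C y1 + c2 *\<^sub>C y2"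
  have hD: "h \<in> Dspace A C" unfolding h_def by (rule pair_in_D[OF l1 l2])
  have hj: "h j = c1 *\<^sub>C (cnj (l1 j) *\<^sub>C w l1 y1) + c2 *\<^sub>C (cnj (l2 j) *\<^sub>C w l2 y2)" for j
    unfolding h_def Dgen_eq ..
  have eq: "(norm ((\<Sum>j\<in>UNIV. adjoint (A j) (h j)) + adjoint C yy))\<^sup>2
        + (norm ((\<Sum>j\<in>UNIV. adjoint (B j) (h j)) + adjoint D yy))\<^sup>2
        = (\<Sum>j\<in>UNIV. (norm (h j))\<^sup>2) + (norm yy)\<^sup>2"
    using wcoi hD unfolding weakly_coisometric_def by blast
  have ea: "(\<Sum>j\<in>UNIV. adjoint (A j) (h j)) + adjoint C yy = c1 *\<^sub>C w l1 y1 + c2 *\<^sub>C w l2 y2"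
  proof -
    have "(\<Sum>j\<in>UNIV. adjoint (A j) (h j))
        = c1 *\<^sub>C (\<Sum>j\<in>UNIV. adjoint (A j) (cnj (l1 j) *\<^sub>C w l1 y1))
          + c2 *\<^sub>C (\<Sum>j\<in>UNIV. adjoint (A j) (cnj (l2 j) *\<^sub>C w l2 y2))"
      unfolding hj by (simp add: adjoint_add[OF bcA] adjoint_scale[OF bcA] sum.distrib cscale_sum_right)
    also have "\<dots> = c1 *\<^sub>C (w l1 y1 - adjoint C y1) + c2 *\<^sub>C (w l2 y2 - adjoint C y2)"
      by (simp add: sumA_w[OF l1] sumA_w[OF l2])
    finally show ?thesis unfolding yy_def
      by (simp add: adjoint_add[OF bcC] adjoint_scale[OF bcC] cscale_diff_right algebra_simps)
  qed
  have eb: "(\<Sum>j\<in>UNIV. adjoint (B j) (h j)) + adjoint D yy = c1 *\<^sub>C sv l1 y1 + c2 *\<^sub>C sv l2 y2"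
  proof -
    have "(\<Sum>j\<in>UNIV. adjoint (B j) (h j))
        = c1 *\<^sub>C (\<Sum>j\<in>UNIV. adjoint (B j) (cnj (l1 j) *\<^sub>C w l1 y1))
          + c2 *\<^sub>C (\<Sum>j\<in>UNIV. adjoint (B j) (cnj (l2 j) *\<^sub>C w l2 y2))"
      unfolding hj by (simp add: adjoint_add[OF bcB] adjoint_scale[OF bcB] sum.distrib cscale_sum_right)
    then show ?thesis unfolding yy_def sv_def
      by (simp add: adjoint_add[OF bcD] adjoint_scale[OF bcD] cscale_add_right algebra_simps)
  qed
  show ?thesis using eq[unfolded ea eb, unfolded hj yy_def] .
qed

lemma gram_formula:
  assumes l1: "l1 \<in> ballB" and l2: "l2 \<in> ballB"
  shows "cinner (w l1 y1) (w l2 y2) = (cinner y1 y2 - cinner (sv l1 y1) (sv l2 y2)) / (1 - cdot l2 l1)"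
proof -
  have "(1 - cdot l2 l1) * cinner (w l1 y1) (w l2 y2) = cinner y1 y2 - cinner (sv l1 y1) (sv l2 y2)"
    by (rule polar_extract) (rule coi_pair[OF l1 l2])
  moreover have "1 - cdot l2 l1 \<noteq> 0"
    using cdot_lt1[OF l2 l1] by auto
  ultimately show ?thesis by (simp add: field_simps)
qed

lemma A_T_comm: "A j (T l z) = T l (A j z)"
proof -
  have c: "A j (A i z) = A i (A j z)" for i
    using comm unfolding commutative_ops_def by (metis comp_apply)
  show ?thesis unfolding T_def ZA_def
    by (simp add: bclin_diff[OF bcA] bclin_sum[OF bcA] bclin_scale[OF bcA] c)
qed

lemma A_Ti_comm: "l \<in> ballB \<Longrightarrow> A j (Ti l x) = Ti l (A j x)"
proof -
  assume l: "l \<in> ballB"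
  have "Ti l (A j x) = Ti l (A j (T l (Ti l x)))" by (simp add: T_Ti[OF l])
  also have "\<dots> = A j (Ti l x)" by (simp add: A_T_comm Ti_T[OF l])
  finally show ?thesis by simp
qed

lemma T_upd: "T (\<mu>(j := \<mu> j + t)) = (\<lambda>z. T \<mu> z - t *\<^sub>C A j z)"
proof (rule ext)
  fix z
  have "ZA (\<mu>(j := \<mu> j + t)) A z = (\<Sum>i\<in>UNIV. \<mu> i *\<^sub>C A i z + (if i = j then t *\<^sub>C A i z else 0))"
    unfolding ZA_def by (intro sum.cong refl) (simp add: cscale_add_left)
  also have "\<dots> = ZA \<mu> A z + t *\<^sub>C A j z" unfolding ZA_def by (simp add: sum.distrib)
  finally show "T (\<mu>(j := \<mu> j + t)) z = T \<mu> z - t *\<^sub>C A j z" unfolding T_def by simp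
qed

lemma T_scale: "T (\<lambda>i. s * lam i) = (\<lambda>z. z - s *\<^sub>C ZA lam A z)"
  unfolding T_def ZA_def by (simp add: cscale_sum_right cscale_cscale)

lemma bcId: "bounded_clinear (\<lambda>x::'x. x)"
  unfolding bounded_clinear_def by (auto intro: exI[of _ 1])

lemma L1:
  assumes mu: "\<mu> \<in> ballB"
  shows "((\<lambda>t. cinner (C (Ti (\<mu>(j := \<mu> j + t)) x)) y) has_field_derivative
           cinner (C (Ti \<mu> (Ti \<mu> (A j x)))) y) (at 0)"
proof -
  have opn: "open {t. \<mu>(j := \<mu> j + t) \<in> ballB}" by (rule open_ball_pre) (rule cont_upd)
  have "0 \<in> {t. \<mu>(j := \<mu> j + t) \<in> ballB}" using mu by simp
  then have ev: "eventually (\<lambda>t. \<mu>(j := \<mu> j + t) \<in> ballB) (at (0::complex))"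
    using eventually_at_in_open'[OF opn] by simp
  have ev': "eventually (\<lambda>t. bij (\<lambda>z. T \<mu> z - t *\<^sub>C A j z)) (at (0::complex))"
    using ev
  proof eventually_elim
    case (elim t)
    then show ?case using bijT[of "\<mu>(j := \<mu> j + t)"] by (simp only: T_upd)
  qed
  have T0: "(\<lambda>z. T \<mu> z - 0 *\<^sub>C A j z) = T \<mu>" by (rule ext) simp
  have b0: "bij (\<lambda>z. T \<mu> z - 0 *\<^sub>C A j z)" unfolding T0 by (rule bijT[OF mu])
  have m: "0 < 1 - sqrt (Nsq \<mu>)" using sqrtN_lt1[OF mu] by simp
  have bel: "(1 - sqrt (Nsq \<mu>)) * norm z \<le> norm (T \<mu> z - 0 *\<^sub>C A j z)" for z
    using T_below by simp
  have d: "((\<lambda>t. cinner (C (inv (\<lambda>z. T \<mu> z - t *\<^sub>C A j z) x)) y) has_field_derivative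
      cinner (C (inv (\<lambda>z. T \<mu> z - 0 *\<^sub>C A j z) (A j (inv (\<lambda>z. T \<mu> z - 0 *\<^sub>C A j z) x)))) y) (at 0)"
    by (rule deriv_inv[OF bcT bcA bcC ev' b0 m bel])
  have f: "(\<lambda>t. cinner (C (Ti (\<mu>(j := \<mu> j + t)) x)) y) = (\<lambda>t. cinner (C (inv (\<lambda>z. T \<mu> z - t *\<^sub>C A j z) x)) y)"
    by (rule ext) (simp add: Ti_def T_upd)
  show ?thesis unfolding f using d unfolding T0 Ti_def[symmetric] by (simp add: A_Ti_comm[OF mu])
qed

lemma L2:
  assumes opn: "open \<Omega>" and s0: "s0 \<in> \<Omega>" and inb: "\<And>s. s \<in> \<Omega> \<Longrightarrow> (\<lambda>i. s * lam i) \<in> ballB"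
  shows "((\<lambda>s. s * cinner (C (Ti (\<lambda>i. s * lam i) v)) y) has_field_derivative
           cinner (C (Ti (\<lambda>i. s0 * lam i) (Ti (\<lambda>i. s0 * lam i) v))) y) (at s0)"
proof -
  define mu where "mu = (\<lambda>i. s0 * lam i)"
  have mu: "mu \<in> ballB" unfolding mu_def by (rule inb[OF s0])
  define R where "R = Ti mu"
  have ev: "eventually (\<lambda>s. s \<in> \<Omega>) (at s0)" by (rule eventually_at_in_open'[OF opn s0])
  have ev': "eventually (\<lambda>s. bij (\<lambda>z. z - s *\<^sub>C ZA lam A z)) (at s0)"
    using ev
  proof eventually_elim
    case (elim s)
    then show ?case using bijT[OF inb[OF elim]] by (simp only: T_scale)
  qed
  have b0: "bij (\<lambda>z. z - s0 *\<^sub>C ZA lam A z)" using bijT[OF mu] unfolding mu_def T_scale .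
  have m: "0 < 1 - sqrt (Nsq mu)" using sqrtN_lt1[OF mu] by simp
  have bel: "(1 - sqrt (Nsq mu)) * norm z \<le> norm (z - s0 *\<^sub>C ZA lam A z)" for z
    using T_below[of mu z] unfolding mu_def T_scale by simp
  have Rdef: "R = inv (\<lambda>z. z - s0 *\<^sub>C ZA lam A z)" unfolding R_def Ti_def mu_def T_scale ..
  have d: "((\<lambda>s. cinner (C (inv (\<lambda>z. z - s *\<^sub>C ZA lam A z) v)) y) has_field_derivative
      cinner (C (R (ZA lam A (R v)))) y) (at s0)"
    unfolding Rdef by (rule deriv_inv[OF bcId bcZA bcC ev' b0 m bel])
  have f: "(\<lambda>s. cinner (C (inv (\<lambda>z. z - s *\<^sub>C ZA lam A z) v)) y) = (\<lambda>s. cinner (C (Ti (\<lambda>i. s * lam i) v)) y)"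
    by (rule ext) (simp add: Ti_def T_scale)
  have d2: "((\<lambda>s. s * cinner (C (Ti (\<lambda>i. s * lam i) v)) y) has_field_derivative
      1 * cinner (C (Ti (\<lambda>i. s0 * lam i) v)) y + cinner (C (R (ZA lam A (R v)))) y * s0) (at s0)"
    by (rule DERIV_mult[OF DERIV_ident d[unfolded f]])
  have TmuE: "T mu z = z - s0 *\<^sub>C ZA lam A z" for z unfolding mu_def T_scale ..
  have RR: "R (R v) = R v + s0 *\<^sub>C R (ZA lam A (R v))"
  proof -
    define u where "u = R v"
    have "T mu (u + s0 *\<^sub>C R (ZA lam A u)) = T mu u + s0 *\<^sub>C T mu (R (ZA lam A u))"
      by (simp add: bclin_add[OF bcT] bclin_scale[OF bcT])
    also have "\<dots> = u" unfolding R_def by (simp add: T_Ti[OF mu] TmuE[of u])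
    finally have "T mu (u + s0 *\<^sub>C R (ZA lam A u)) = u" .
    then have "R (T mu (u + s0 *\<^sub>C R (ZA lam A u))) = R u" by simp
    then show ?thesis unfolding R_def u_def by (simp add: Ti_T[OF mu])
  qed
  have val: "1 * cinner (C (Ti (\<lambda>i. s0 * lam i) v)) y + cinner (C (R (ZA lam A (R v)))) y * s0
      = cinner (C (Ti (\<lambda>i. s0 * lam i) (Ti (\<lambda>i. s0 * lam i) v))) y"
    unfolding mu_def[symmetric] R_def[symmetric] RR
    by (simp add: bclin_add[OF bcC] bclin_scale[OF bcC] cinner_add_left cinner_cscale_left mult.commute)
  show ?thesis using d2 unfolding val .
qed

end

context rsys begin

lemma zero_ball: "(\<lambda>_. 0) \<in> ballB"
  by (simp add: ballB_Nsq Nsq_def)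

lemma Ti_zero: "Ti (\<lambda>_. 0) z = z"
proof -
  have "T (\<lambda>_. 0) z = z" unfolding T_def ZA_def by simp
  then show ?thesis using Ti_T[OF zero_ball, of z] by simp
qed

end

lemma Nsq_scale: "Nsq (\<lambda>i. s * lam i) = (cmod s)\<^sup>2 * Nsq lam"
  unfolding Nsq_def by (simp add: norm_mult power_mult_distrib sum_distrib_left)

lemma scale_ball:
  fixes lam :: "'d::finite \<Rightarrow> complex"
  assumes lam: "lam \<in> ballB"
  defines "r \<equiv> (if Nsq lam = 0 then 2 else 1 / sqrt (Nsq lam))"
  shows "\<And>s. s \<in> ball 0 r \<Longrightarrow> (\<lambda>i. s * lam i) \<in> ballB" and "(1::complex) \<in> ball 0 r" and "(0::complex) \<in> ball 0 r"
proof -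
  have N0: "0 \<le> Nsq lam" by (rule Nsq_nonneg)
  have N1: "Nsq lam < 1" using lam by (simp add: ballB_Nsq)
  show "(\<lambda>i. s * lam i) \<in> ballB" if s: "s \<in> ball 0 r" for s
  proof (cases "Nsq lam = 0")
    case True then show ?thesis by (simp add: ballB_Nsq Nsq_scale)
  next
    case False
    then have p: "0 < Nsq lam" using N0 by simp
    have "cmod s < 1 / sqrt (Nsq lam)" using s False by (simp add: r_def)
    then have "cmod s * sqrt (Nsq lam) < 1" using p by (simp add: field_simps)
    moreover have "0 \<le> cmod s * sqrt (Nsq lam)" using N0 by simp
    ultimately have "(cmod s * sqrt (Nsq lam))\<^sup>2 < 1\<^sup>2"
      by (intro power_strict_mono) auto
    then have "(cmod s * sqrt (Nsq lam))\<^sup>2 < 1" by simp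
    then have "(cmod s)\<^sup>2 * Nsq lam < 1" using N0 by (simp add: power_mult_distrib)
    then show ?thesis by (simp add: ballB_Nsq Nsq_scale)
  qed
  show "(1::complex) \<in> ball 0 r"
  proof (cases "Nsq lam = 0")
    case True then show ?thesis by (simp add: r_def dist_norm)
  next
    case False
    then have p: "0 < Nsq lam" using N0 by simp
    have "sqrt (Nsq lam) < 1" using N1 by simp
    then have "1 < 1 / sqrt (Nsq lam)" using p by (simp add: field_simps)
    then show ?thesis using False by (simp add: r_def dist_norm)
  qed
  show "(0::complex) \<in> ball 0 r"
  proof (cases "Nsq lam = 0")
    case True then show ?thesis by (simp add: r_def)
  next
    case False
    then have p: "0 < Nsq lam" using N0 by simp
    then show ?thesis using False by (simp add: r_def)
  qed
qed


theorem corollary3p7: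
  fixes S :: "('d::finite \<Rightarrow> complex) \<Rightarrow> 'u::chilbert \<Rightarrow> 'y::chilbert"
    and A1 :: "'d \<Rightarrow> 'x1::chilbert \<Rightarrow> 'x1" and B1 :: "'d \<Rightarrow> 'u \<Rightarrow> 'x1" and C1 :: "'x1 \<Rightarrow> 'y"
    and A2 :: "'d \<Rightarrow> 'x2::chilbert \<Rightarrow> 'x2" and B2 :: "'d \<Rightarrow> 'u \<Rightarrow> 'x2" and C2 :: "'x2 \<Rightarrow> 'y"
    and D :: "'u \<Rightarrow> 'y"
  assumes "schur_class S"
    and "is_realization S A1 B1 C1 D" and "observable A1 C1"
    and "commutative_ops A1" and "weakly_coisometric A1 B1 C1 D"
    and "is_realization S A2 B2 C2 D" and "observable A2 C2"
    and "commutative_ops A2" and "weakly_coisometric A2 B2 C2 D"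
  shows "\<exists>U :: 'x1 \<Rightarrow> 'x2. unitary U \<and> (\<forall>x. C2 (U x) = C1 x) \<and>
           (\<forall>j x. A2 j (U x) = U (A1 j x))"
proof -
  interpret s1: rsys S A1 B1 C1 D using assms(2-5) by unfold_locales
  interpret s2: rsys S A2 B2 C2 D using assms(6-9) by unfold_locales
  define P where "P = {p :: ('d \<Rightarrow> complex) \<times> 'y. fst p \<in> ballB}"
  define w1 where "w1 p = s1.w (fst p) (snd p)" for p
  define w2 where "w2 p = s2.w (fst p) (snd p)" for p
  have sveq: "s1.sv l y = s2.sv l y" if l: "l \<in> ballB" for l y
    by (rule cinner_ext_right) (simp add: s1.S_adj[OF l, symmetric] s2.S_adj[OF l, symmetric])
  have gram: "cinner (w1 p) (w1 q) = cinner (w2 p) (w2 q)" if "p \<in> P" "q \<in> P" for p q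
    using that unfolding w1_def w2_def P_def
    by (simp add: s1.gram_formula s2.gram_formula sveq)
  have o1: "x = 0" if "\<forall>p\<in>P. cinner x (w1 p) = 0" for x
    by (rule s1.orth) (use that in \<open>auto simp: P_def w1_def\<close>)
  have o2: "x = 0" if "\<forall>p\<in>P. cinner x (w2 p) = 0" for x
    by (rule s2.orth) (use that in \<open>auto simp: P_def w2_def\<close>)
  have ex: "\<exists>U. unitary U \<and> (\<forall>x. \<forall>p\<in>P. cinner (U x) (w2 p) = cinner x (w1 p))"
    by (rule gram_unitary) (rule gram, assumption+, rule o1, assumption, rule o2, assumption)
  then obtain U where U: "unitary U" and Uw0: "\<forall>x. \<forall>p\<in>P. cinner (U x) (w2 p) = cinner x (w1 p)"
    by (elim exE conjE)
  have Uw: "\<And>x p. p \<in> P \<Longrightarrow> cinner (U x) (w2 p) = cinner x (w1 p)" using Uw0 by blast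
  have bcU: "bounded_clinear U" using U unfolding unitary_def by blast
  have FEQ: "cinner (C2 (s2.Ti l (U x))) y = cinner (C1 (s1.Ti l x)) y" if l: "l \<in> ballB" for l x y
    using Uw[of "(l, y)" x] l unfolding P_def w1_def w2_def by (simp add: s1.key[OF l] s2.key[OF l])
  have Cpart: "C2 (U x) = C1 x" for x
  proof (rule cinner_ext_left)
    fix y show "cinner (C2 (U x)) y = cinner (C1 x) y"
      using FEQ[OF s1.zero_ball, of x y] by (simp add: s1.Ti_zero s2.Ti_zero)
  qed
  have MC: "cinner (C2 (s2.Ti lam (A2 j (U x)))) y = cinner (C1 (s1.Ti lam (A1 j x))) y"
    if lam: "lam \<in> ballB" for lam j x y
  proof -
    define r where "r = (if Nsq lam = 0 then 2 else 1 / sqrt (Nsq lam))"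
    define \<Omega> where "\<Omega> = ball (0::complex) r"
    have inb: "\<And>s. s \<in> \<Omega> \<Longrightarrow> (\<lambda>i. s * lam i) \<in> ballB" and one: "1 \<in> \<Omega>" and zero: "0 \<in> \<Omega>"
      using scale_ball[OF lam] unfolding \<Omega>_def r_def by auto
    have opn: "open \<Omega>" unfolding \<Omega>_def by simp
    have cvx: "convex \<Omega>" unfolding \<Omega>_def by simp
    define \<phi>1 where "\<phi>1 s = s * cinner (C1 (s1.Ti (\<lambda>i. s * lam i) (A1 j x))) y" for s
    define \<phi>2 where "\<phi>2 s = s * cinner (C2 (s2.Ti (\<lambda>i. s * lam i) (A2 j (U x)))) y" for s
    define \<psi>1 where "\<psi>1 s = cinner (C1 (s1.Ti (\<lambda>i. s * lam i) (s1.Ti (\<lambda>i. s * lam i) (A1 j x)))) y" for s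
    define \<psi>2 where "\<psi>2 s = cinner (C2 (s2.Ti (\<lambda>i. s * lam i) (s2.Ti (\<lambda>i. s * lam i) (A2 j (U x))))) y" for s
    have d1: "(\<phi>1 has_field_derivative \<psi>1 s) (at s)" if "s \<in> \<Omega>" for s
      unfolding \<phi>1_def[abs_def] \<psi>1_def by (rule s1.L2[OF opn that inb])
    have d2: "(\<phi>2 has_field_derivative \<psi>2 s) (at s)" if "s \<in> \<Omega>" for s
      unfolding \<phi>2_def[abs_def] \<psi>2_def by (rule s2.L2[OF opn that inb])
    have pe: "\<psi>1 s = \<psi>2 s" if s: "s \<in> \<Omega>" for s
    proof -
      define mu where "mu = (\<lambda>i. s * lam i)"
      have mu: "mu \<in> ballB" unfolding mu_def by (rule inb[OF s])
      define Ob where "Ob = {t. mu(j := mu j + t) \<in> ballB}"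
      have oO: "open Ob" unfolding Ob_def by (rule open_ball_pre) (rule cont_upd)
      have O0: "0 \<in> Ob" unfolding Ob_def using mu by simp
      have e1: "((\<lambda>t. cinner (C1 (s1.Ti (mu(j := mu j + t)) x)) y) has_field_derivative \<psi>1 s) (at 0)"
        unfolding \<psi>1_def mu_def[symmetric] by (rule s1.L1[OF mu])
      have e2: "((\<lambda>t. cinner (C2 (s2.Ti (mu(j := mu j + t)) (U x))) y) has_field_derivative \<psi>2 s) (at 0)"
        unfolding \<psi>2_def mu_def[symmetric] by (rule s2.L1[OF mu])
      have e1': "((\<lambda>t. cinner (C2 (s2.Ti (mu(j := mu j + t)) (U x))) y) has_field_derivative \<psi>1 s) (at 0)"
        by (rule has_field_derivative_transform_within_open[OF e1 oO O0]) (simp add: Ob_def FEQ)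
      show ?thesis using DERIV_unique[OF e1' e2] .
    qed
    have dz: "((\<lambda>s. \<phi>1 s - \<phi>2 s) has_field_derivative 0) (at s within \<Omega>)" if "s \<in> \<Omega>" for s
    proof -
      have "((\<lambda>s. \<phi>1 s - \<phi>2 s) has_field_derivative \<psi>1 s - \<psi>2 s) (at s)"
        by (rule DERIV_diff[OF d1[OF that] d2[OF that]])
      then show ?thesis using pe[OF that] by (simp add: has_field_derivative_at_within)
    qed
    obtain c where c: "\<And>s. s \<in> \<Omega> \<Longrightarrow> \<phi>1 s - \<phi>2 s = c"
      using has_field_derivative_zero_constant[OF cvx dz] by blast
    have "\<phi>1 1 - \<phi>2 1 = \<phi>1 0 - \<phi>2 0" using c[OF one] c[OF zero] by simp
    then have "\<phi>1 1 = \<phi>2 1" by (simp add: \<phi>1_def \<phi>2_def)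
    moreover have "(\<lambda>i. 1 * lam i) = lam" by simp
    ultimately show ?thesis unfolding \<phi>1_def \<phi>2_def by simp
  qed
  have Apart: "A2 j (U x) = U (A1 j x)" for j x
  proof -
    have "A2 j (U x) - U (A1 j x) = 0"
    proof (rule s2.obs')
      fix lam :: "'d \<Rightarrow> complex" assume lam: "lam \<in> ballB"
      have "cinner (C2 (s2.Ti lam (A2 j (U x)))) y = cinner (C2 (s2.Ti lam (U (A1 j x)))) y" for y
        using MC[OF lam] FEQ[OF lam] by simp
      then have "C2 (s2.Ti lam (A2 j (U x))) = C2 (s2.Ti lam (U (A1 j x)))" by (rule cinner_ext_left)
      then show "C2 (s2.Ti lam (A2 j (U x) - U (A1 j x))) = 0"
        by (simp add: s2.Ti_diff[OF lam] bclin_diff[OF s2.bcC])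
    qed
    then show ?thesis by simp
  qed
  show ?thesis using U Cpart Apart by blast
qed

end
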